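(* Let $G$ be a hierarchical configuration model satisfying the Community regularity condition and the Inter-community connectivity condition (stated in the context), explored by the community exploration process described in the context, and let $s_{(i)}$ be the size of the $i$-th discovered community. Then for any $\eta,\delta>0$ with $\delta>2\eta\,\mathbb{E}[DS]/\mathbb{E}[D]$ there exists $\zeta>0$ such that, for all sufficiently large $n$, $$\mathbb{P}\Big(\sum_{i=1}^{\eta n^{2/3}}s_{(i)}>\delta n^{2/3}\Big)\le e^{-\zeta n^{2/3}/s_{\max}},$$ where $s_{\max}=\max_{i\in[n]}s_{H_i}$.
   Context: A community is $H=(F,\boldsymbol d)$, $F=(V_F,E_F)$ a finite simple connected graph, $\boldsymbol d=(d_v^{(b)})_{v\in V_F}$ nonnegative integers; $s_H=|V_F|$, $d_H=\sum_v d_v^{(b)}$. The HCM with community sequence $(H_i)_{i\in[n]}$: attach $d_v^{(b)}$ half-edges to each vertex $v$ and pair all half-edges uniformly at random (total even). $H_n$ uniform community, $D_n=d_{H_n}$, $S_n=s_{H_n}$, $P_n(H)$ fraction of communities equal to $H$. Community regularity condition: (i) $P_n(H)\to P(H)$ for all $H$ ($P$ a probability distribution on communities, $(S,D)$ size and degree under $P$); (ii) $\mathbb{E}[S_n]\to\mathbb{E}[S]<\infty$; (iii) $\mathbb{E}[D_nS_n]\to\mathbb{E}[DS]<\infty$; (iv) $s_{\max}\log(n)/n^{2/3}\to0$. Inter-community connectivity condition: (i) $\mathbb{E}[D_n^3]\to\mathbb{E}[D^3]<\infty$; (ii) $\mathbb{P}(D=0)<1$, $\mathbb{P}(D=1)\in(0,1)$;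 (iii) $\mathbb{E}[D_n(D_n-1)]/\mathbb{E}[D_n]=1+\lambda n^{-1/3}+o(n^{-1/3})$ for some $\lambda\in\mathbb{R}$. Exploration process (depth-first, on communities): initially all half-edges are sleeping. At each step: if there is an active half-edge, take the most recently added one $a$, remove it, reveal its partner $b$ and discover the community of $b$; its other half-edges become active, except that those paired to currently active half-edges or paired within the same community are removed with their partners. If no half-edge is active, choose a sleeping half-edge uniformly at random, discover its community, and make all its half-edges active. Each step discovers one new community. *)

theory Defs
  imports "HOL-Probability.Probability" "HOL-Library.Nat_Bijection"
begin

(* A community H = (F, d): vertices of F are 0..<s (s = length of the degree list),
   edges are 2-element sets of vertices, d ! v = d_v^(b) = number of half-edges at v. *)
type_synonym community = "nat set set \<times> nat list"

definition csize :: "community \<Rightarrow> nat" where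
  "csize H = length (snd H)"

definition cdeg :: "community \<Rightarrow> nat" where
  "cdeg H = sum_list (snd H)"

definition is_community :: "community \<Rightarrow> bool" where
  "is_community H \<longleftrightarrow> csize H \<ge> 1
     \<and> (\<forall>e\<in>fst H. \<exists>u v. e = {u, v} \<and> u \<noteq> v \<and> u < csize H \<and> v < csize H)
     \<and> (\<forall>u<csize H. \<forall>v<csize H. (u, v) \<in> {(x, y). {x, y} \<in> fst H}\<^sup>*)"

(* half-edge (c, v, k): k-th half-edge attached to vertex v of community number c *)
type_synonym hedge = "nat \<times> nat \<times> nat"

definition comm_hedges :: "(nat \<Rightarrow> community) \<Rightarrow> nat \<Rightarrow> hedge set" where
  "comm_hedges Hs c = {(c', v, k). c' = c \<and> v < csize (Hs c) \<and> k < snd (Hs c) ! v}"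

definition hcm_hedges :: "(nat \<Rightarrow> community) \<Rightarrow> nat \<Rightarrow> hedge set" where
  "hcm_hedges Hs n = (\<Union>c<n. comm_hedges Hs c)"

definition perfect_matchings :: "hedge set \<Rightarrow> (hedge \<Rightarrow> hedge) set" where
  "perfect_matchings A = {M. (\<forall>h\<in>A. M h \<in> A \<and> M h \<noteq> h \<and> M (M h) = h) \<and> (\<forall>h. h \<notin> A \<longrightarrow> M h = h)}"

(* state: (stack of active half-edges, most recent first; sleeping half-edges;
           list of discovered community indices in order of discovery) *)
(* fixed deterministic order on half-edges, used to break ties among half-edges
   activated simultaneously (via an injective encoding into nat) *)
definition hedge_key :: "hedge \<Rightarrow> nat" where
  "hedge_key h = prod_encode (fst h, prod_encode (snd h))"

definition hedge_list :: "hedge set \<Rightarrow> hedge list" where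
  "hedge_list A = sorted_key_list_of_set hedge_key A"

type_synonym expl_state = "hedge list \<times> hedge set \<times> nat list"

definition explore_step :: "(nat \<Rightarrow> community) \<Rightarrow> (hedge \<Rightarrow> hedge) \<Rightarrow> expl_state \<Rightarrow> expl_state pmf" where
  "explore_step Hs M st = (case st of (act, sl, disc) \<Rightarrow>
     (case act of
        a # act' \<Rightarrow>
          (let b = M a; c = fst b; Hc = comm_hedges Hs c;
               new = hedge_list {h \<in> Hc. h \<noteq> b \<and> M h \<notin> set act' \<and> fst (M h) \<noteq> c}
           in return_pmf (new @ filter (\<lambda>x. M x \<notin> Hc) act', sl - Hc, disc @ [c]))
      | [] \<Rightarrow>
          (if sl = {} then return_pmf st
           else pmf_of_set sl \<bind> (\<lambda>h. let c = fst h; Hc = comm_hedges Hs c in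
                  return_pmf (hedge_list {h' \<in> Hc. fst (M h') \<noteq> c}, sl - Hc, disc @ [c])))))"

(* n steps of the exploration (enough to discover every community that has half-edges) *)
definition explore_dist :: "(nat \<Rightarrow> community) \<Rightarrow> nat \<Rightarrow> (hedge \<Rightarrow> hedge) \<Rightarrow> expl_state pmf" where
  "explore_dist Hs n M = ((\<lambda>p. p \<bind> explore_step Hs M) ^^ n) (return_pmf ([], hcm_hedges Hs n, []))"

definition hcm_exploration :: "(nat \<Rightarrow> community) \<Rightarrow> nat \<Rightarrow> nat list pmf" where
  "hcm_exploration Hs n =
     pmf_of_set (perfect_matchings (hcm_hedges Hs n)) \<bind>
       (\<lambda>M. map_pmf (\<lambda>st. snd (snd st)) (explore_dist Hs n M))"

(* sum_{i=1}^{k} s_(i) (discovered communities beyond the last one contribute 0) *)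
definition first_sizes_sum :: "(nat \<Rightarrow> community) \<Rightarrow> nat \<Rightarrow> nat list \<Rightarrow> nat" where
  "first_sizes_sum Hs k disc = (\<Sum>c\<leftarrow>take k disc. csize (Hs c))"

definition hcm_smax :: "(nat \<Rightarrow> community) \<Rightarrow> nat \<Rightarrow> nat" where
  "hcm_smax Hs n = Max (csize ` Hs ` {..<n})"

definition emp_mean :: "(nat \<Rightarrow> community) \<Rightarrow> nat \<Rightarrow> (community \<Rightarrow> real) \<Rightarrow> real" where
  "emp_mean Hs n f = (\<Sum>i<n. f (Hs i)) / real n"

end

theory Submission
  imports Defs
begin


definition Ej :: "(nat \<Rightarrow> community) \<Rightarrow> nat \<Rightarrow> nat \<Rightarrow> (hedge \<Rightarrow> hedge) \<Rightarrow> expl_state pmf" where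
  "Ej Hs N j M = ((\<lambda>p. p \<bind> explore_step Hs M) ^^ j) (return_pmf ([], hcm_hedges Hs N, []))"

lemma Ej_0: "Ej Hs N 0 M = return_pmf ([], hcm_hedges Hs N, [])"
  by (simp add: Ej_def)

lemma Ej_Suc: "Ej Hs N (Suc j) M = Ej Hs N j M \<bind> explore_step Hs M"
  by (simp add: Ej_def)

lemma explore_dist_Ej: "explore_dist Hs n M = Ej Hs n n M"
  by (simp add: Ej_def explore_dist_def)

lemma step_active: "explore_step Hs M (a#act', sl, disc) =
  return_pmf (hedge_list {h \<in> comm_hedges Hs (fst (M a)). h \<noteq> M a \<and> M h \<notin> set act' \<and> fst (M h) \<noteq> fst (M a)}
     @ filter (\<lambda>x. M x \<notin> comm_hedges Hs (fst (M a))) act', sl - comm_hedges Hs (fst (M a)), disc @ [fst (M a)])"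
  by (simp add: explore_step_def Let_def)

lemma step_empty: "explore_step Hs M ([], {}, disc) = return_pmf ([], {}, disc)"
  by (simp add: explore_step_def)

lemma step_restart: "sl \<noteq> {} \<Longrightarrow> explore_step Hs M ([], sl, disc) =
  map_pmf (\<lambda>h. (hedge_list {h' \<in> comm_hedges Hs (fst h). fst (M h') \<noteq> fst h}, sl - comm_hedges Hs (fst h), disc @ [fst h])) (pmf_of_set sl)"
  by (simp add: explore_step_def Let_def map_pmf_def)

lemma comm_hedges_fst: "h \<in> comm_hedges Hs c \<Longrightarrow> fst h = c"
  by (auto simp: comm_hedges_def)

lemma comm_hedges_eq: "comm_hedges Hs c = (\<lambda>(v,k). (c,v,k)) ` (SIGMA v:{..<csize (Hs c)}. {..<snd (Hs c) ! v})"
  by (auto simp: comm_hedges_def image_iff)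

lemma finite_comm_hedges[simp]: "finite (comm_hedges Hs c)"
  unfolding comm_hedges_eq by auto

lemma card_comm_hedges: "card (comm_hedges Hs c) = cdeg (Hs c)"
proof -
  have "card (comm_hedges Hs c) = card (SIGMA v:{..<csize (Hs c)}. {..<snd (Hs c) ! v})"
    unfolding comm_hedges_eq by (rule card_image) (auto simp: inj_on_def)
  also have "\<dots> = (\<Sum>v<csize (Hs c). snd (Hs c) ! v)" by simp
  also have "\<dots> = cdeg (Hs c)" by (simp add: cdeg_def csize_def sum_list_sum_nth atLeast0LessThan)
  finally show ?thesis .
qed

lemma finite_hcm_hedges[simp]: "finite (hcm_hedges Hs N)"
  by (simp add: hcm_hedges_def)

lemma hcm_hedges_mem: "h \<in> hcm_hedges Hs N \<longleftrightarrow> fst h < N \<and> h \<in> comm_hedges Hs (fst h)"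
  by (auto simp: hcm_hedges_def comm_hedges_fst)

lemma inj_hedge_key: "inj hedge_key"
  unfolding hedge_key_def inj_def
  by (auto dest!: inj_prod_encode[THEN injD] simp: prod_eq_iff)

interpretation hk: folding_insort_key "(\<le>)::nat\<Rightarrow>nat\<Rightarrow>bool" "(<)" UNIV hedge_key
  by unfold_locales (simp add: inj_hedge_key)

lemma ik_eq: "linorder.insort_key ((\<le>)::nat\<Rightarrow>_) (f::'b\<Rightarrow>nat) = insort_key f"
proof (intro ext)
  fix x xs show "linorder.insort_key ((\<le>)::nat\<Rightarrow>_) (f::'b\<Rightarrow>nat) x xs = insort_key f x xs"
    by (induct xs) (simp_all add: linorder.insort_key.simps[OF linorder_class.linorder_axioms])
qed

lemma skl_eq: "linorder.sorted_key_list_of_set ((\<le>)::nat\<Rightarrow>_) (f::'b\<Rightarrow>nat) A = sorted_key_list_of_set f A"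
  by (simp add: linorder.sorted_key_list_of_set_def[OF linorder_class.linorder_axioms] sorted_key_list_of_set_def ik_eq)

lemma set_hedge_list: "finite X \<Longrightarrow> set (hedge_list X) = X"
  unfolding hedge_list_def using hk.set_sorted_key_list_of_set[of X] by (simp add: skl_eq)

lemma card_hcm_hedges: "card (hcm_hedges Hs N) = (\<Sum>c<N. cdeg (Hs c))"
  unfolding hcm_hedges_def
  by (subst card_UN_disjoint) (auto simp: card_comm_hedges dest: comm_hedges_fst)



definition inv0 :: "(nat \<Rightarrow> community) \<Rightarrow> nat \<Rightarrow> nat \<Rightarrow> expl_state \<Rightarrow> bool" where
  "inv0 Hs N j s \<longleftrightarrow> (case s of (act, sl, disc) \<Rightarrow> sl \<subseteq> hcm_hedges Hs N
     \<and> (\<forall>x\<in>sl. fst x \<notin> set disc) \<and> (\<forall>a\<in>set act. fst a \<in> set disc)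
     \<and> (length disc = j \<or> (act = [] \<and> sl = {} \<and> length disc \<le> j)))"

lemma hcm_in_comm: "x \<in> hcm_hedges Hs N \<Longrightarrow> fst x = c \<Longrightarrow> x \<in> comm_hedges Hs c"
  by (simp add: hcm_hedges_mem)

lemma comm_sub_hcm: "c < N \<Longrightarrow> comm_hedges Hs c \<subseteq> hcm_hedges Hs N"
  by (auto simp: hcm_hedges_def)

lemma inv0_Ej: "s \<in> set_pmf (Ej Hs N j M) \<Longrightarrow> inv0 Hs N j s"
proof (induction j arbitrary: s)
  case 0
  then show ?case by (simp add: Ej_0 inv0_def)
next
  case (Suc j)
  from Suc.prems obtain s' where s': "s' \<in> set_pmf (Ej Hs N j M)" and ss: "s \<in> set_pmf (explore_step Hs M s')"
    by (auto simp: Ej_Suc)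
  obtain act sl disc where s'eq: "s' = (act, sl, disc)" by (cases s') auto
  have I: "inv0 Hs N j (act, sl, disc)" using Suc.IH s' s'eq by simp
  hence slA: "sl \<subseteq> hcm_hedges Hs N" and sld: "\<forall>x\<in>sl. fst x \<notin> set disc"
    and actd: "\<forall>a\<in>set act. fst a \<in> set disc"
    and len: "length disc = j \<or> (act = [] \<and> sl = {} \<and> length disc \<le> j)"
    by (auto simp: inv0_def)
  show ?case
  proof (cases act)
    case (Cons a act')
    let ?c = "fst (M a)"
    let ?new = "{h \<in> comm_hedges Hs ?c. h \<noteq> M a \<and> M h \<notin> set act' \<and> fst (M h) \<noteq> ?c}"
    have seq: "s = (hedge_list ?new @ filter (\<lambda>x. M x \<notin> comm_hedges Hs ?c) act', sl - comm_hedges Hs ?c, disc @ [?c])"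
      using ss by (simp add: s'eq Cons step_active)
    have l: "length (disc @ [?c]) = Suc j" using len Cons by auto
    have q1: "sl - comm_hedges Hs ?c \<subseteq> hcm_hedges Hs N" using slA by blast
    have q2: "\<forall>x\<in>sl - comm_hedges Hs ?c. fst x \<notin> set (disc @ [?c])"
      using slA sld hcm_in_comm by fastforce
    have sn: "set (hedge_list ?new) \<subseteq> comm_hedges Hs ?c" by (subst set_hedge_list) auto
    have q3: "\<forall>y\<in>set (hedge_list ?new @ filter (\<lambda>x. M x \<notin> comm_hedges Hs ?c) act'). fst y \<in> set (disc @ [?c])"
    proof
      fix y assume "y \<in> set (hedge_list ?new @ filter (\<lambda>x. M x \<notin> comm_hedges Hs ?c) act')"
      then consider "y \<in> set (hedge_list ?new)" | "y \<in> set act'" by auto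
      then show "fst y \<in> set (disc @ [?c])"
      proof cases
        case 1 then have "fst y = ?c" using sn comm_hedges_fst by blast
        then show ?thesis by simp
      next
        case 2 then show ?thesis using actd Cons by simp
      qed
    qed
    show ?thesis unfolding seq inv0_def prod.case using q1 q2 q3 l by blast
  next
    case Nil
    show ?thesis
    proof (cases "sl = {}")
      case True
      have "s = ([], {}, disc)" using ss unfolding s'eq Nil True step_empty by simp
      then show ?thesis using I Nil True by (simp add: inv0_def, linarith)
    next
      case False
      have fin: "finite sl" using finite_subset[OF slA] by simp
      let ?f = "\<lambda>h. (hedge_list {h' \<in> comm_hedges Hs (fst h). fst (M h') \<noteq> fst h}, sl - comm_hedges Hs (fst h), disc @ [fst h])"
      have "s \<in> set_pmf (map_pmf ?f (pmf_of_set sl))" using ss unfolding s'eq Nil step_restart[OF False] .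
      hence "s \<in> ?f ` sl" by (simp only: set_map_pmf set_pmf_of_set[OF False fin])
      then obtain h where h: "h \<in> sl" and seq: "s = ?f h" by blast
      have l: "length (disc @ [fst h]) = Suc j" using len False by auto
      have q1: "sl - comm_hedges Hs (fst h) \<subseteq> hcm_hedges Hs N" using slA by blast
      have q2: "\<forall>x\<in>sl - comm_hedges Hs (fst h). fst x \<notin> set (disc @ [fst h])"
        using slA sld hcm_in_comm by fastforce
      have sn: "set (hedge_list {h' \<in> comm_hedges Hs (fst h). fst (M h') \<noteq> fst h}) \<subseteq> comm_hedges Hs (fst h)"
        by (subst set_hedge_list) auto
      have q3: "\<forall>y\<in>set (hedge_list {h' \<in> comm_hedges Hs (fst h). fst (M h') \<noteq> fst h}). fst y \<in> set (disc @ [fst h])"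
        using sn comm_hedges_fst by fastforce
      show ?thesis unfolding seq inv0_def prod.case using q1 q2 q3 l by blast
    qed
  qed
qed

definition invM :: "(nat \<Rightarrow> community) \<Rightarrow> nat \<Rightarrow> (hedge \<Rightarrow> hedge) \<Rightarrow> expl_state \<Rightarrow> bool" where
  "invM Hs N M s \<longleftrightarrow> (case s of (act, sl, disc) \<Rightarrow>
      sl = {x \<in> hcm_hedges Hs N. fst x \<notin> set disc} \<and> set act \<subseteq> hcm_hedges Hs N
     \<and> (\<forall>a\<in>set act. fst (M a) \<notin> set disc)
     \<and> (\<forall>x\<in>hcm_hedges Hs N. fst x \<in> set disc \<and> fst (M x) \<notin> set disc \<longrightarrow> x \<in> set act))"

lemma pm_D:
  assumes "M \<in> perfect_matchings A" "h \<in> A"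
  shows "M h \<in> A" "M h \<noteq> h" "M (M h) = h"
  using assms by (auto simp: perfect_matchings_def)

lemma invM_Ej:
  assumes M: "M \<in> perfect_matchings (hcm_hedges Hs N)"
  shows "s \<in> set_pmf (Ej Hs N j M) \<Longrightarrow> invM Hs N M s"
proof (induction j arbitrary: s)
  case 0
  then show ?case by (simp add: Ej_0 invM_def)
next
  case (Suc j)
  let ?A = "hcm_hedges Hs N"
  from Suc.prems obtain s' where s': "s' \<in> set_pmf (Ej Hs N j M)" and ss: "s \<in> set_pmf (explore_step Hs M s')"
    by (auto simp: Ej_Suc)
  obtain act sl disc where s'eq: "s' = (act, sl, disc)" by (cases s') auto
  have I: "inv0 Hs N j (act, sl, disc)" using inv0_Ej s' s'eq by blast
  hence slA: "sl \<subseteq> ?A" and sld: "\<forall>x\<in>sl. fst x \<notin> set disc"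
    and actd: "\<forall>a\<in>set act. fst a \<in> set disc"
    by (auto simp: inv0_def)
  have J: "invM Hs N M (act, sl, disc)" using Suc.IH s' s'eq by simp
  hence J': "sl = {x \<in> ?A. fst x \<notin> set disc} \<and> set act \<subseteq> ?A
    \<and> (\<forall>a\<in>set act. fst (M a) \<notin> set disc)
    \<and> (\<forall>x\<in>?A. fst x \<in> set disc \<and> fst (M x) \<notin> set disc \<longrightarrow> x \<in> set act)"
    unfolding invM_def prod.case .
  note sleq = J'[THEN conjunct1]
  note actA = J'[THEN conjunct2, THEN conjunct1]
  note ii = J'[THEN conjunct2, THEN conjunct2, THEN conjunct1]
  note iii = J'[THEN conjunct2, THEN conjunct2, THEN conjunct2]
  show ?case
  proof (cases act)
    case (Cons a act')
    let ?b = "M a"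
    let ?c = "fst (M a)"
    let ?Hc = "comm_hedges Hs ?c"
    let ?new = "{h \<in> ?Hc. h \<noteq> ?b \<and> M h \<notin> set act' \<and> fst (M h) \<noteq> ?c}"
    have "a \<in> set act" using Cons by simp
    hence aA: "a \<in> ?A" using actA by (rule subsetD[rotated])
    have bA: "?b \<in> ?A" using pm_D[OF M aA] by simp
    have cN: "?c < N" using bA by (simp add: hcm_hedges_mem)
    have HcA: "?Hc \<subseteq> ?A" using comm_sub_hcm[OF cN] .
    have Hc_iff: "\<And>x. x \<in> ?A \<Longrightarrow> x \<in> ?Hc \<longleftrightarrow> fst x = ?c"
      using hcm_in_comm comm_hedges_fst by blast
    have cnd: "?c \<notin> set disc" using ii Cons by auto
    have seq: "s = (hedge_list ?new @ filter (\<lambda>x. M x \<notin> ?Hc) act', sl - ?Hc, disc @ [?c])"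
      using ss by (simp add: s'eq Cons step_active)
    have setnew: "set (hedge_list ?new) = ?new" by (rule set_hedge_list) auto
    have P1: "sl - ?Hc = {x \<in> ?A. fst x \<notin> set (disc @ [?c])}"
    proof (rule set_eqI)
      fix x show "x \<in> sl - ?Hc \<longleftrightarrow> x \<in> {x \<in> ?A. fst x \<notin> set (disc @ [?c])}"
        using Hc_iff[of x] unfolding sleq by auto
    qed
    have "set act' \<subseteq> set act" using Cons by auto
    hence P2: "set (hedge_list ?new @ filter (\<lambda>x. M x \<notin> ?Hc) act') \<subseteq> ?A"
      using setnew HcA actA by auto
    have P3: "\<forall>y\<in>set (hedge_list ?new @ filter (\<lambda>x. M x \<notin> ?Hc) act'). fst (M y) \<notin> set (disc @ [?c])"
    proof
      fix y assume y: "y \<in> set (hedge_list ?new @ filter (\<lambda>x. M x \<notin> ?Hc) act')"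
      show "fst (M y) \<notin> set (disc @ [?c])"
      proof (cases "y \<in> ?new")
        case True
        hence yHc: "y \<in> ?Hc" and yb: "y \<noteq> ?b" and ya: "M y \<notin> set act'" and yc: "fst (M y) \<noteq> ?c"
          by simp_all
        have yA: "y \<in> ?A" using HcA yHc by (rule subsetD)
        have MyA: "M y \<in> ?A" by (rule pm_D(1)[OF M yA])
        have fy: "fst y = ?c" by (rule comm_hedges_fst[OF yHc])
        have "fst (M y) \<notin> set disc"
        proof
          assume "fst (M y) \<in> set disc"
          moreover have "fst (M (M y)) \<notin> set disc" using pm_D(3)[OF M yA] fy cnd by simp
          ultimately have "M y \<in> set act" using iii MyA by blast
          moreover have "M y \<noteq> a" using yb pm_D(3)[OF M yA] by metis
          ultimately show False using ya Cons by simp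
        qed
        then show ?thesis using yc by simp
      next
        case False
        hence y1: "y \<in> set act'" and y2: "M y \<notin> ?Hc" using y setnew by (simp_all, blast+)
        from y1 Cons have "y \<in> set act" by simp
        with actA have yA: "y \<in> ?A" by (rule subsetD)
        have MyA: "M y \<in> ?A" by (rule pm_D(1)[OF M yA])
        have "fst (M y) \<notin> set disc" using ii Cons y1 by simp
        moreover have "fst (M y) \<noteq> ?c" using Hc_iff[OF MyA] y2 by simp
        ultimately show ?thesis by simp
      qed
    qed
    have P4: "\<forall>x\<in>?A. fst x \<in> set (disc @ [?c]) \<and> fst (M x) \<notin> set (disc @ [?c]) \<longrightarrow>
               x \<in> set (hedge_list ?new @ filter (\<lambda>x. M x \<notin> ?Hc) act')"
    proof (intro ballI impI)
      fix x assume xA: "x \<in> ?A" and xc: "fst x \<in> set (disc @ [?c]) \<and> fst (M x) \<notin> set (disc @ [?c])"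
      have MxA: "M x \<in> ?A" by (rule pm_D(1)[OF M xA])
      have xc2: "fst (M x) \<notin> set disc" "fst (M x) \<noteq> ?c" using xc by simp_all
      show "x \<in> set (hedge_list ?new @ filter (\<lambda>x. M x \<notin> ?Hc) act')"
      proof (cases "fst x = ?c")
        case True
        have xH: "x \<in> ?Hc" using Hc_iff[OF xA] True by simp
        have xb: "x \<noteq> ?b"
        proof
          assume "x = ?b"
          hence "M x = a" using pm_D(3)[OF M aA] by simp
          moreover have "fst a \<in> set disc" using actd Cons by simp
          ultimately show False using xc2 by simp
        qed
        have xa: "M x \<notin> set act'"
        proof
          assume "M x \<in> set act'"
          hence "fst (M x) \<in> set disc" using actd Cons by simp
          thus False using xc2 by simp
        qed
        have "x \<in> ?new" using xH xb xa xc2 by simp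
        thus ?thesis using setnew by simp
      next
        case False
        hence "fst x \<in> set disc" using xc by simp
        hence "x \<in> set act" using iii xA xc2 by blast
        moreover have "x \<noteq> a" using xc2 by auto
        moreover have "M x \<notin> ?Hc" using Hc_iff[OF MxA] xc2 by simp
        ultimately show ?thesis using Cons by simp
      qed
    qed
    show ?thesis unfolding seq invM_def prod.case by (rule conjI[OF P1 conjI[OF P2 conjI[OF P3 P4]]])
  next
    case Nil
    show ?thesis
    proof (cases "sl = {}")
      case True
      have "s = ([], {}, disc)" using ss unfolding s'eq Nil True step_empty by simp
      then show ?thesis using J Nil True by simp
    next
      case False
      have fin: "finite sl" using finite_subset[OF slA] by simp
      let ?f = "\<lambda>h. (hedge_list {h' \<in> comm_hedges Hs (fst h). fst (M h') \<noteq> fst h}, sl - comm_hedges Hs (fst h), disc @ [fst h])"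
      have "s \<in> set_pmf (map_pmf ?f (pmf_of_set sl))" using ss unfolding s'eq Nil step_restart[OF False] .
      hence "s \<in> ?f ` sl" by (simp only: set_map_pmf set_pmf_of_set[OF False fin])
      then obtain h where h: "h \<in> sl" and seq: "s = ?f h" by blast
      let ?c = "fst h"
      let ?Hc = "comm_hedges Hs ?c"
      let ?new = "{h' \<in> ?Hc. fst (M h') \<noteq> ?c}"
      have hA: "h \<in> ?A" using slA h by (rule subsetD)
      have cN: "?c < N" using hA by (simp add: hcm_hedges_mem)
      have HcA: "?Hc \<subseteq> ?A" using comm_sub_hcm[OF cN] .
      have Hc_iff: "\<And>x. x \<in> ?A \<Longrightarrow> x \<in> ?Hc \<longleftrightarrow> fst x = ?c"
        using hcm_in_comm comm_hedges_fst by blast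
      have cnd: "?c \<notin> set disc" using sld h by blast
      have setnew: "set (hedge_list ?new) = ?new" by (rule set_hedge_list) auto
      have P1: "sl - ?Hc = {x \<in> ?A. fst x \<notin> set (disc @ [?c])}"
      proof (rule set_eqI)
        fix x show "x \<in> sl - ?Hc \<longleftrightarrow> x \<in> {x \<in> ?A. fst x \<notin> set (disc @ [?c])}"
          using Hc_iff[of x] unfolding sleq by auto
      qed
      have P2: "set (hedge_list ?new) \<subseteq> ?A" unfolding setnew using HcA by blast
      have P3: "\<forall>y\<in>set (hedge_list ?new). fst (M y) \<notin> set (disc @ [?c])"
      proof
        fix y assume "y \<in> set (hedge_list ?new)"
        hence yHc: "y \<in> ?Hc" and yc: "fst (M y) \<noteq> ?c" using setnew by simp_all
        have yA: "y \<in> ?A" using HcA yHc by (rule subsetD)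
        have MyA: "M y \<in> ?A" by (rule pm_D(1)[OF M yA])
        have fy: "fst y = ?c" by (rule comm_hedges_fst[OF yHc])
        have "fst (M y) \<notin> set disc"
        proof
          assume "fst (M y) \<in> set disc"
          moreover have "fst (M (M y)) \<notin> set disc" using pm_D(3)[OF M yA] fy cnd by simp
          ultimately have "M y \<in> set act" using iii MyA by blast
          thus False using Nil by simp
        qed
        thus "fst (M y) \<notin> set (disc @ [?c])" using yc by simp
      qed
      have P4: "\<forall>x\<in>?A. fst x \<in> set (disc @ [?c]) \<and> fst (M x) \<notin> set (disc @ [?c]) \<longrightarrow>
                 x \<in> set (hedge_list ?new)"
      proof (intro ballI impI)
        fix x assume xA: "x \<in> ?A" and xc: "fst x \<in> set (disc @ [?c]) \<and> fst (M x) \<notin> set (disc @ [?c])"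
        show "x \<in> set (hedge_list ?new)"
        proof (cases "fst x = ?c")
          case True
          have "x \<in> ?Hc" using Hc_iff[OF xA] True by simp
          thus ?thesis using xc setnew by simp
        next
          case False
          hence "x \<in> set act" using iii xA xc by simp
          thus ?thesis using Nil by simp
        qed
      qed
      show ?thesis unfolding seq invM_def prod.case by (rule conjI[OF P1 conjI[OF P2 conjI[OF P3 P4]]])
    qed
  qed
qed



definition tr :: "hedge \<Rightarrow> hedge \<Rightarrow> hedge \<Rightarrow> hedge" where
  "tr b b' x = (if x = b then b' else if x = b' then b else x)"

definition cj :: "hedge \<Rightarrow> hedge \<Rightarrow> (hedge \<Rightarrow> hedge) \<Rightarrow> hedge \<Rightarrow> hedge" where
  "cj b b' M = tr b b' \<circ> M \<circ> tr b b'"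

lemma tr_tr[simp]: "tr b b' (tr b b' x) = x"
  by (simp add: tr_def)

lemma cj_cj[simp]: "cj b b' (cj b b' M) = M"
  by (simp add: cj_def fun_eq_iff)

lemma tr_other: "x \<noteq> b \<Longrightarrow> x \<noteq> b' \<Longrightarrow> tr b b' x = x"
  by (simp add: tr_def)

lemma tr_mem: "b \<notin> S \<Longrightarrow> b' \<notin> S \<Longrightarrow> tr b b' y \<in> S \<longleftrightarrow> y \<in> S"
  by (auto simp: tr_def)

lemma tr_fst: "fst b \<noteq> c \<Longrightarrow> fst b' \<noteq> c \<Longrightarrow> fst (tr b b' y) = c \<longleftrightarrow> fst y = c"
  by (auto simp: tr_def)

lemma cj_app: "x \<noteq> b \<Longrightarrow> x \<noteq> b' \<Longrightarrow> cj b b' M x = tr b b' (M x)"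
  by (simp add: cj_def tr_other)

lemma step_sl_sub:
  assumes "s \<in> set_pmf (explore_step Hs M (act, sl, disc))" "sl \<subseteq> hcm_hedges Hs N"
  shows "fst (snd s) \<subseteq> sl"
proof (cases act)
  case (Cons a act')
  then show ?thesis using assms by (auto simp: step_active)
next
  case Nil
  show ?thesis
  proof (cases "sl = {}")
    case True
    then show ?thesis using assms Nil by (simp add: step_empty)
  next
    case False
    have fin: "finite sl" using finite_subset[OF assms(2)] by simp
    let ?f = "\<lambda>h. (hedge_list {h' \<in> comm_hedges Hs (fst h). fst (M h') \<noteq> fst h}, sl - comm_hedges Hs (fst h), disc @ [fst h])"
    have "s \<in> set_pmf (map_pmf ?f (pmf_of_set sl))" using assms(1) unfolding Nil step_restart[OF False] .
    hence "s \<in> ?f ` sl" by (simp only: set_map_pmf set_pmf_of_set[OF False fin])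
    then obtain h where "s = ?f h" "h \<in> sl" by (rule imageE)
    then show ?thesis by simp
  qed
qed

lemma pmf_map_mono:
  assumes "\<And>h. h \<in> set_pmf p \<Longrightarrow> f h = s \<Longrightarrow> g h = s"
  shows "pmf (map_pmf f p) s \<le> pmf (map_pmf g p) s"
proof -
  have "pmf (map_pmf f p) s = measure p (f -` {s})" by (rule pmf_map)
  also have "\<dots> = measure p (f -` {s} \<inter> set_pmf p)" by (simp add: measure_Int_set_pmf)
  also have "\<dots> \<le> measure p (g -` {s} \<inter> set_pmf p)"
    by (rule measure_pmf.finite_measure_mono) (use assms in auto)
  also have "\<dots> = measure p (g -` {s})" by (simp add: measure_Int_set_pmf)
  also have "\<dots> = pmf (map_pmf g p) s" by (rule pmf_map[symmetric])
  finally show ?thesis .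
qed

lemma step_swap:
  assumes I: "inv0 Hs N j (act, sl, disc)"
    and ss: "s \<in> set_pmf (explore_step Hs M (act, sl, disc))"
    and b: "b \<in> fst (snd s)" and b': "b' \<in> fst (snd s)"
  shows "pmf (explore_step Hs M (act, sl, disc)) s \<le> pmf (explore_step Hs (cj b b' M) (act, sl, disc)) s"
proof -
  let ?A = "hcm_hedges Hs N"
  let ?M' = "cj b b' M"
  have slA: "sl \<subseteq> ?A" and sld: "\<forall>x\<in>sl. fst x \<notin> set disc"
    and actd: "\<forall>a\<in>set act. fst a \<in> set disc" using I by (auto simp: inv0_def)
  have ssl: "fst (snd s) \<subseteq> sl" by (rule step_sl_sub[OF ss slA])
  have bsl: "b \<in> sl" "b' \<in> sl" using ssl b b' by auto
  have bA: "b \<in> ?A" "b' \<in> ?A" using bsl slA by auto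
  have bact: "b \<notin> set act" "b' \<notin> set act" using bsl sld actd by auto
  show ?thesis
  proof (cases act)
    case (Cons a act')
    let ?c = "fst (M a)"
    let ?Hc = "comm_hedges Hs ?c"
    have seq: "s = (hedge_list {h \<in> ?Hc. h \<noteq> M a \<and> M h \<notin> set act' \<and> fst (M h) \<noteq> ?c}
       @ filter (\<lambda>x. M x \<notin> ?Hc) act', sl - ?Hc, disc @ [?c])"
      using ss by (simp add: Cons step_active)
    have bH: "b \<notin> ?Hc" "b' \<notin> ?Hc" using b b' seq by auto
    have bc: "fst b \<noteq> ?c" "fst b' \<noteq> ?c" using bH bA hcm_in_comm by blast+
    have ab: "a \<noteq> b" "a \<noteq> b'" using bact Cons by auto
    have act'b: "b \<notin> set act'" "b' \<notin> set act'" using bact Cons by auto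
    have Ma: "?M' a = M a"
    proof -
      have "?M' a = tr b b' (M a)" using cj_app ab by metis
      moreover have "M a \<noteq> b" "M a \<noteq> b'" using bc by auto
      ultimately show ?thesis by (simp add: tr_other)
    qed
    have HcM: "\<And>h. h \<in> ?Hc \<Longrightarrow> ?M' h = tr b b' (M h)"
      using cj_app bH by metis
    have new_eq: "{h \<in> ?Hc. h \<noteq> M a \<and> ?M' h \<notin> set act' \<and> fst (?M' h) \<noteq> ?c}
       = {h \<in> ?Hc. h \<noteq> M a \<and> M h \<notin> set act' \<and> fst (M h) \<noteq> ?c}"
    proof (rule Collect_cong)
      fix h
      show "(h \<in> ?Hc \<and> h \<noteq> M a \<and> ?M' h \<notin> set act' \<and> fst (?M' h) \<noteq> ?c) =
            (h \<in> ?Hc \<and> h \<noteq> M a \<and> M h \<notin> set act' \<and> fst (M h) \<noteq> ?c)"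
      proof (cases "h \<in> ?Hc")
        case True
        hence "?M' h = tr b b' (M h)" by (rule HcM)
        then show ?thesis using tr_mem[OF act'b, of "M h"] tr_fst[OF bc, of "M h"] by simp
      qed simp
    qed
    have filt_eq: "filter (\<lambda>x. ?M' x \<notin> ?Hc) act' = filter (\<lambda>x. M x \<notin> ?Hc) act'"
    proof (rule filter_cong[OF refl])
      fix x assume "x \<in> set act'"
      hence "x \<noteq> b" "x \<noteq> b'" using act'b by auto
      hence "?M' x = tr b b' (M x)" by (rule cj_app)
      thus "(?M' x \<notin> ?Hc) = (M x \<notin> ?Hc)" using tr_mem[OF bH] by simp
    qed
    have "explore_step Hs ?M' (act, sl, disc) = explore_step Hs M (act, sl, disc)"
      unfolding Cons step_active Ma new_eq filt_eq ..
    then show ?thesis by simp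
  next
    case Nil
    show ?thesis
    proof (cases "sl = {}")
      case True
      then show ?thesis using Nil by (simp add: step_empty)
    next
      case False
      show ?thesis unfolding Nil step_restart[OF False]
      proof (rule pmf_map_mono)
        fix h assume hin: "h \<in> set_pmf (pmf_of_set sl)"
          and fh: "(hedge_list {h' \<in> comm_hedges Hs (fst h). fst (M h') \<noteq> fst h}, sl - comm_hedges Hs (fst h), disc @ [fst h]) = s"
        let ?c = "fst h"
        let ?Hc = "comm_hedges Hs ?c"
        have bH: "b \<notin> ?Hc" "b' \<notin> ?Hc" using b b' fh by auto
        have bc: "fst b \<noteq> ?c" "fst b' \<noteq> ?c" using bH bA hcm_in_comm by blast+
        have HcM: "\<And>h. h \<in> ?Hc \<Longrightarrow> ?M' h = tr b b' (M h)"
          using cj_app bH by metis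
        have "{h' \<in> ?Hc. fst (?M' h') \<noteq> ?c} = {h' \<in> ?Hc. fst (M h') \<noteq> ?c}"
        proof (rule Collect_cong)
          fix h' show "(h' \<in> ?Hc \<and> fst (?M' h') \<noteq> ?c) = (h' \<in> ?Hc \<and> fst (M h') \<noteq> ?c)"
          proof (cases "h' \<in> ?Hc")
            case True
            hence "?M' h' = tr b b' (M h')" by (rule HcM)
            then show ?thesis using tr_fst[OF bc, of "M h'"] by simp
          qed simp
        qed
        then show "(hedge_list {h' \<in> ?Hc. fst (?M' h') \<noteq> ?c}, sl - ?Hc, disc @ [?c]) = s"
          using fh by simp
      qed
    qed
  qed
qed

lemma Ej_swap_le:
  "b \<in> fst (snd s) \<Longrightarrow> b' \<in> fst (snd s) \<Longrightarrow> pmf (Ej Hs N j M) s \<le> pmf (Ej Hs N j (cj b b' M)) s"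
proof (induction j arbitrary: s)
  case 0
  then show ?case by (simp add: Ej_0)
next
  case (Suc j)
  let ?M' = "cj b b' M"
  have "ennreal (pmf (Ej Hs N (Suc j) M) s) = (\<integral>\<^sup>+ s'. pmf (explore_step Hs M s') s \<partial>measure_pmf (Ej Hs N j M))"
    unfolding Ej_Suc by (rule ennreal_pmf_bind)
  also have "\<dots> = (\<integral>\<^sup>+ s'. ennreal (pmf (Ej Hs N j M) s') * ennreal (pmf (explore_step Hs M s') s) \<partial>count_space UNIV)"
    by (rule nn_integral_measure_pmf)
  also have "\<dots> \<le> (\<integral>\<^sup>+ s'. ennreal (pmf (Ej Hs N j ?M') s') * ennreal (pmf (explore_step Hs ?M' s') s) \<partial>count_space UNIV)"
  proof (rule nn_integral_mono)
    fix s'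
    show "ennreal (pmf (Ej Hs N j M) s') * ennreal (pmf (explore_step Hs M s') s)
        \<le> ennreal (pmf (Ej Hs N j ?M') s') * ennreal (pmf (explore_step Hs ?M' s') s)"
    proof (cases "s' \<in> set_pmf (Ej Hs N j M) \<and> s \<in> set_pmf (explore_step Hs M s')")
      case True
      obtain act sl disc where s'eq: "s' = (act, sl, disc)" by (cases s') auto
      have I: "inv0 Hs N j (act, sl, disc)" using inv0_Ej True s'eq by blast
      have slA: "sl \<subseteq> hcm_hedges Hs N" using I by (simp add: inv0_def)
      have ssl: "fst (snd s) \<subseteq> sl" using step_sl_sub True s'eq slA by blast
      have "pmf (Ej Hs N j M) s' \<le> pmf (Ej Hs N j ?M') s'"
        using Suc.IH[of s'] Suc.prems ssl s'eq by auto
      moreover have "pmf (explore_step Hs M s') s \<le> pmf (explore_step Hs ?M' s') s"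
        using step_swap[OF I] True Suc.prems s'eq by auto
      ultimately show ?thesis by (simp add: ennreal_mult'[symmetric] mult_mono)
    next
      case False
      hence "pmf (Ej Hs N j M) s' = 0 \<or> pmf (explore_step Hs M s') s = 0"
        by (auto simp: set_pmf_eq)
      then show ?thesis by auto
    qed
  qed
  also have "\<dots> = (\<integral>\<^sup>+ s'. pmf (explore_step Hs ?M' s') s \<partial>measure_pmf (Ej Hs N j ?M'))"
    by (rule nn_integral_measure_pmf[symmetric])
  also have "\<dots> = ennreal (pmf (Ej Hs N (Suc j) ?M') s)"
    unfolding Ej_Suc by (rule ennreal_pmf_bind[symmetric])
  finally show ?case by simp
qed

lemma Ej_swap:
  "b \<in> fst (snd s) \<Longrightarrow> b' \<in> fst (snd s) \<Longrightarrow> pmf (Ej Hs N j (cj b b' M)) s = pmf (Ej Hs N j M) s"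
  using Ej_swap_le[of b s b' Hs N j M] Ej_swap_le[of b s b' Hs N j "cj b b' M"] by simp



lemma sym_sum:
  fixes PM :: "(hedge \<Rightarrow> hedge) set" and w :: "(hedge \<Rightarrow> hedge) \<Rightarrow> real" and \<phi> :: "hedge \<Rightarrow> real"
  assumes fin: "finite PM" "finite S" and ne: "S \<noteq> {}"
    and wS: "\<And>M. M \<in> PM \<Longrightarrow> w M \<noteq> 0 \<Longrightarrow> M a \<in> S"
    and cjP: "\<And>b b' M. b \<in> S \<Longrightarrow> b' \<in> S \<Longrightarrow> M \<in> PM \<Longrightarrow> cj b b' M \<in> PM"
    and cjw: "\<And>b b' M. b \<in> S \<Longrightarrow> b' \<in> S \<Longrightarrow> M \<in> PM \<Longrightarrow> w (cj b b' M) = w M"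
    and cja: "\<And>b b' M. b \<in> S \<Longrightarrow> b' \<in> S \<Longrightarrow> M \<in> PM \<Longrightarrow> cj b b' M a = tr b b' (M a)"
  shows "(\<Sum>M\<in>PM. w M * \<phi> (M a)) = (\<Sum>b\<in>S. \<phi> b) / card S * (\<Sum>M\<in>PM. w M)"
proof -
  define W where "W b = (\<Sum>M\<in>PM. if M a = b then w M else 0)" for b
  obtain b0 where b0: "b0 \<in> S" using ne by blast
  have Weq: "W b = W b0" if b: "b \<in> S" for b
  proof -
    have "W b0 = (\<Sum>M\<in>PM. if M a = b0 then w M else 0)" by (simp add: W_def)
    also have "\<dots> = (\<Sum>M\<in>PM. if M a = b then w M else 0)"
    proof (rule sum.reindex_bij_witness[where i = "cj b0 b" and j = "cj b0 b"])
      fix M assume "M \<in> PM" thus "cj b0 b (cj b0 b M) = M" by simp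
    next
      fix M assume "M \<in> PM" thus "cj b0 b M \<in> PM" using cjP b0 b by blast
    next
      fix M assume "M \<in> PM" thus "cj b0 b (cj b0 b M) = M" by simp
    next
      fix M assume "M \<in> PM" thus "cj b0 b M \<in> PM" using cjP b0 b by blast
    next
      fix M assume M: "M \<in> PM"
      have e: "cj b0 b M a = tr b0 b (M a)" using cja b0 b M by blast
      have "(cj b0 b M a = b) = (M a = b0)" unfolding e by (auto simp: tr_def)
      thus "(if cj b0 b M a = b then w (cj b0 b M) else 0) = (if M a = b0 then w M else 0)"
        using cjw[OF b0 b M] by simp
    qed
    also have "\<dots> = W b" by (simp add: W_def)
    finally show ?thesis by simp
  qed
  have split: "\<And>g::hedge \<Rightarrow> real. (\<Sum>M\<in>PM. w M * g (M a)) = (\<Sum>b\<in>S. g b * W b)"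
  proof -
    fix g :: "hedge \<Rightarrow> real"
    have "(\<Sum>M\<in>PM. w M * g (M a)) = (\<Sum>M\<in>PM. \<Sum>b\<in>S. if M a = b then w M * g b else 0)"
    proof (rule sum.cong[OF refl])
      fix M assume M: "M \<in> PM"
      show "w M * g (M a) = (\<Sum>b\<in>S. if M a = b then w M * g b else 0)"
      proof (cases "M a \<in> S")
        case True then show ?thesis using fin(2) by (simp add: sum.delta)
      next
        case False
        hence "w M = 0" using wS[OF M] by blast
        moreover have "(\<Sum>b\<in>S. if M a = b then w M * g b else 0) = 0"
          by (rule sum.neutral) (use False in auto)
        ultimately show ?thesis by simp
      qed
    qed
    also have "\<dots> = (\<Sum>b\<in>S. \<Sum>M\<in>PM. if M a = b then w M * g b else 0)" by (rule sum.swap)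
    also have "\<dots> = (\<Sum>b\<in>S. g b * W b)"
      unfolding W_def by (rule sum.cong[OF refl]) (auto simp: sum_distrib_left intro!: sum.cong)
    finally show "(\<Sum>M\<in>PM. w M * g (M a)) = (\<Sum>b\<in>S. g b * W b)" .
  qed
  have "(\<Sum>M\<in>PM. w M * \<phi> (M a)) = (\<Sum>b\<in>S. \<phi> b * W b0)" using split[of \<phi>] Weq by simp
  also have "\<dots> = (\<Sum>b\<in>S. \<phi> b) * W b0" by (simp add: sum_distrib_right)
  finally have L: "(\<Sum>M\<in>PM. w M * \<phi> (M a)) = (\<Sum>b\<in>S. \<phi> b) * W b0" .
  have "(\<Sum>M\<in>PM. w M) = (\<Sum>M\<in>PM. w M * (\<lambda>_. 1) (M a))" by simp
  also have "\<dots> = (\<Sum>b\<in>S. W b0)" using split[of "\<lambda>_. 1"] Weq by simp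
  also have "\<dots> = card S * W b0" by simp
  finally have R: "(\<Sum>M\<in>PM. w M) = card S * W b0" .
  have "card S > 0" using fin ne by (simp add: card_gt_0_iff)
  then show ?thesis unfolding L R by (simp add: field_simps)
qed

lemma card_A_minus_sl:
  assumes "length disc \<le> k"
    and Rc: "\<forall>D\<subseteq>{..<N}. card D \<le> k \<longrightarrow> real (\<Sum>c\<in>D. cdeg (Hs c)) \<le> R"
  shows "real (card {x \<in> hcm_hedges Hs N. fst x \<in> set disc}) \<le> R"
proof -
  let ?D = "set disc \<inter> {..<N}"
  have sub: "{x \<in> hcm_hedges Hs N. fst x \<in> set disc} \<subseteq> (\<Union>c\<in>?D. comm_hedges Hs c)"
    by (auto simp: hcm_hedges_mem)
  have "card {x \<in> hcm_hedges Hs N. fst x \<in> set disc} \<le> card (\<Union>c\<in>?D. comm_hedges Hs c)"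
    by (rule card_mono[OF _ sub]) auto
  also have "\<dots> \<le> (\<Sum>c\<in>?D. card (comm_hedges Hs c))" by (rule card_UN_le) auto
  also have "\<dots> = (\<Sum>c\<in>?D. cdeg (Hs c))" by (simp add: card_comm_hedges)
  finally have 1: "card {x \<in> hcm_hedges Hs N. fst x \<in> set disc} \<le> (\<Sum>c\<in>?D. cdeg (Hs c))" .
  have "card ?D \<le> card (set disc)" by (rule card_mono) auto
  also have "\<dots> \<le> length disc" by (rule card_length)
  finally have "card ?D \<le> k" using assms(1) by simp
  hence "real (\<Sum>c\<in>?D. cdeg (Hs c)) \<le> R" using Rc by auto
  with 1 show ?thesis by linarith
qed

lemma gsl_bound:
  fixes \<theta> R :: real
  assumes th: "\<theta> \<ge> 0" and sleq: "sl = {x \<in> hcm_hedges Hs N. fst x \<notin> set disc}"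
    and len: "length disc \<le> k"
    and Rc: "\<forall>D\<subseteq>{..<N}. card D \<le> k \<longrightarrow> real (\<Sum>c\<in>D. cdeg (Hs c)) \<le> R"
    and RL: "R < card (hcm_hedges Hs N)"
  shows "(\<Sum>h\<in>sl. exp (\<theta> * csize (Hs (fst h)))) / card sl
     \<le> 1 + (\<Sum>h\<in>hcm_hedges Hs N. exp (\<theta> * csize (Hs (fst h))) - 1) / (card (hcm_hedges Hs N) - R)"
proof -
  let ?A = "hcm_hedges Hs N"
  let ?e = "\<lambda>h. exp (\<theta> * csize (Hs (fst h)))"
  have slA: "sl \<subseteq> ?A" using sleq by auto
  have finsl: "finite sl" using finite_subset[OF slA] by simp
  have "?A - sl = {x \<in> ?A. fst x \<in> set disc}" using sleq by auto
  hence "real (card (?A - sl)) \<le> R" using card_A_minus_sl[OF len Rc] by simp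
  moreover have "card (?A - sl) = card ?A - card sl" using slA by (simp add: card_Diff_subset finsl)
  moreover have "card sl \<le> card ?A" using slA by (simp add: card_mono)
  ultimately have csl: "real (card ?A) - R \<le> card sl" by linarith
  have pos: "real (card ?A) - R > 0" using RL by simp
  have e1: "\<And>h. ?e h - 1 \<ge> 0" using th by simp
  define B where "B = (\<Sum>h\<in>?A. ?e h - 1)"
  have B0: "B \<ge> 0" unfolding B_def by (rule sum_nonneg) (use e1 in auto)
  have "(\<Sum>h\<in>sl. ?e h) = (\<Sum>h\<in>sl. 1 + (?e h - 1))" by simp
  also have "\<dots> = card sl + (\<Sum>h\<in>sl. ?e h - 1)" by (simp add: sum.distrib sum_subtractf)
  also have "(\<Sum>h\<in>sl. ?e h - 1) \<le> B" unfolding B_def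
    by (rule sum_mono2) (use slA e1 in auto)
  finally have s1: "(\<Sum>h\<in>sl. ?e h) \<le> card sl + B" by simp
  have cslp: "real (card sl) > 0" using csl pos by linarith
  have "(\<Sum>h\<in>sl. ?e h) / card sl \<le> (card sl + B) / card sl"
    using s1 cslp by (simp add: divide_right_mono)
  also have "\<dots> = 1 + B / card sl" using cslp by (simp add: field_simps)
  also have "\<dots> \<le> 1 + B / (card ?A - R)"
    using B0 csl pos by (simp add: frac_le)
  finally show ?thesis unfolding B_def .
qed



definition Fd :: "real \<Rightarrow> (nat \<Rightarrow> community) \<Rightarrow> nat \<Rightarrow> nat list \<Rightarrow> real" where
  "Fd \<theta> Hs k d = exp (\<theta> * real (first_sizes_sum Hs k d))"

lemma Fd_pos: "Fd \<theta> Hs k d > 0" by (simp add: Fd_def)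

lemma fss_snoc_lt: "length d < k \<Longrightarrow> first_sizes_sum Hs k (d @ [c]) = first_sizes_sum Hs k d + csize (Hs c)"
  by (simp add: first_sizes_sum_def)

lemma fss_snoc_ge: "\<not> length d < k \<Longrightarrow> first_sizes_sum Hs k (d @ [c]) = first_sizes_sum Hs k d"
  by (simp add: first_sizes_sum_def)

lemma Fd_snoc_lt: "length d < k \<Longrightarrow> Fd \<theta> Hs k (d @ [c]) = Fd \<theta> Hs k d * exp (\<theta> * csize (Hs c))"
  by (simp add: Fd_def fss_snoc_lt distrib_left exp_add)

lemma Fd_snoc_ge: "\<not> length d < k \<Longrightarrow> Fd \<theta> Hs k (d @ [c]) = Fd \<theta> Hs k d"
  by (simp add: Fd_def fss_snoc_ge)

definition EG :: "real \<Rightarrow> (nat \<Rightarrow> community) \<Rightarrow> nat \<Rightarrow> (hedge \<Rightarrow> hedge) \<Rightarrow> expl_state \<Rightarrow> real" where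
  "EG \<theta> Hs k M s = (case s of (act, sl, disc) \<Rightarrow> (case act of
      a # act' \<Rightarrow> Fd \<theta> Hs k (disc @ [fst (M a)])
    | [] \<Rightarrow> (if sl = {} then Fd \<theta> Hs k disc else (\<Sum>h\<in>sl. Fd \<theta> Hs k (disc @ [fst h])) / card sl)))"

lemma nn_step:
  assumes "finite sl"
  shows "(\<integral>\<^sup>+ s'. ennreal (Fd \<theta> Hs k (snd (snd s'))) \<partial>explore_step Hs M (act, sl, disc)) = ennreal (EG \<theta> Hs k M (act, sl, disc))"
proof (cases act)
  case (Cons a act')
  then show ?thesis by (simp add: step_active EG_def)
next
  case Nil
  show ?thesis
  proof (cases "sl = {}")
    case True
    then show ?thesis using Nil by (simp add: step_empty EG_def)
  next
    case False
    have cp: "real (card sl) > 0" using False assms by (simp add: card_gt_0_iff)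
    have "(\<integral>\<^sup>+ s'. ennreal (Fd \<theta> Hs k (snd (snd s'))) \<partial>explore_step Hs M (act, sl, disc))
        = (\<integral>\<^sup>+ h. ennreal (Fd \<theta> Hs k (disc @ [fst h])) \<partial>pmf_of_set sl)"
      using Nil False by (simp add: step_restart)
    also have "\<dots> = (\<Sum>h\<in>sl. ennreal (Fd \<theta> Hs k (disc @ [fst h]))) / card sl"
      by (rule nn_integral_pmf_of_set[OF False assms])
    also have "\<dots> = ennreal (\<Sum>h\<in>sl. Fd \<theta> Hs k (disc @ [fst h])) / ennreal (real (card sl))"
      by (simp add: sum_ennreal less_imp_le[OF Fd_pos] ennreal_of_nat_eq_real_of_nat)
    also have "\<dots> = ennreal ((\<Sum>h\<in>sl. Fd \<theta> Hs k (disc @ [fst h])) / card sl)"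
      by (rule divide_ennreal) (use cp in \<open>auto intro: sum_nonneg less_imp_le[OF Fd_pos]\<close>)
    finally show ?thesis using Nil False by (simp add: EG_def)
  qed
qed

lemma cj_pm:
  assumes M: "M \<in> perfect_matchings A" and b: "b \<in> A" "b' \<in> A"
  shows "cj b b' M \<in> perfect_matchings A"
proof -
  have trA: "\<And>x. x \<in> A \<Longrightarrow> tr b b' x \<in> A" using b by (simp add: tr_def)
  have trn: "\<And>x. x \<notin> A \<Longrightarrow> tr b b' x = x" using b by (auto simp: tr_def)
  have "\<forall>h\<in>A. cj b b' M h \<in> A \<and> cj b b' M h \<noteq> h \<and> cj b b' M (cj b b' M h) = h"
  proof
    fix h assume h: "h \<in> A"
    have th: "tr b b' h \<in> A" by (rule trA[OF h])
    have 1: "cj b b' M h \<in> A" unfolding cj_def comp_def using pm_D(1)[OF M th] trA by blast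
    have 2: "cj b b' M h \<noteq> h"
    proof
      assume "cj b b' M h = h"
      hence "tr b b' (tr b b' (M (tr b b' h))) = tr b b' h" unfolding cj_def comp_def by simp
      hence "M (tr b b' h) = tr b b' h" by simp
      thus False using pm_D(2)[OF M th] by simp
    qed
    have 3: "cj b b' M (cj b b' M h) = h" unfolding cj_def comp_def using pm_D(3)[OF M th] by simp
    show "cj b b' M h \<in> A \<and> cj b b' M h \<noteq> h \<and> cj b b' M (cj b b' M h) = h" using 1 2 3 by blast
  qed
  moreover have "\<forall>h. h \<notin> A \<longrightarrow> cj b b' M h = h"
  proof (intro allI impI)
    fix h assume h: "h \<notin> A"
    have "\<forall>h. h \<notin> A \<longrightarrow> M h = h" using M unfolding perfect_matchings_def by blast
    hence "M h = h" using h by blast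
    thus "cj b b' M h = h" unfolding cj_def comp_def using trn[OF h] by simp
  qed
  ultimately show ?thesis by (simp add: perfect_matchings_def)
qed



definition qq :: "real \<Rightarrow> real \<Rightarrow> (nat \<Rightarrow> community) \<Rightarrow> nat \<Rightarrow> real" where
  "qq \<theta> R Hs N = 1 + (\<Sum>h\<in>hcm_hedges Hs N. exp (\<theta> * real (csize (Hs (fst h)))) - 1) / (real (card (hcm_hedges Hs N)) - R)"

lemma qq_ge1:
  fixes \<theta> R :: real
  assumes "\<theta> \<ge> 0" "R < card (hcm_hedges Hs N)"
  shows "qq \<theta> R Hs N \<ge> 1"
proof -
  have "(\<Sum>h\<in>hcm_hedges Hs N. exp (\<theta> * csize (Hs (fst h))) - 1) \<ge> 0"
    by (rule sum_nonneg) (use assms(1) in simp)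
  thus ?thesis using assms(2) unfolding qq_def by simp
qed

lemma le_Q: "0 \<le> (x::real) \<Longrightarrow> 1 \<le> Q \<Longrightarrow> x \<le> Q * x"
  using mult_right_mono[of 1 Q x] by simp

lemma state_claim:
  fixes \<theta> R :: real and s :: expl_state
  assumes th: "\<theta> \<ge> 0"
    and Rc: "\<forall>D\<subseteq>{..<N}. card D \<le> k \<longrightarrow> real (\<Sum>c\<in>D. cdeg (Hs c)) \<le> R"
    and RL: "R < card (hcm_hedges Hs N)"
    and finPM: "finite (perfect_matchings (hcm_hedges Hs N))"
  shows "(\<Sum>M\<in>perfect_matchings (hcm_hedges Hs N). pmf (Ej Hs N j M) s * EG \<theta> Hs k M s)
    \<le> (if j < k then qq \<theta> R Hs N else 1) *
       (\<Sum>M\<in>perfect_matchings (hcm_hedges Hs N). pmf (Ej Hs N j M) s * Fd \<theta> Hs k (snd (snd s)))"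
proof -
  let ?A = "hcm_hedges Hs N"
  let ?PM = "perfect_matchings ?A"
  let ?Q = "if j < k then qq \<theta> R Hs N else 1"
  define w where "w M = pmf (Ej Hs N j M) s" for M
  obtain act sl disc where seq: "s = (act, sl, disc)" by (cases s) auto
  define Fs where "Fs = Fd \<theta> Hs k disc"
  have Fs0: "Fs > 0" unfolding Fs_def by (rule Fd_pos)
  have Q1: "?Q \<ge> 1" using qq_ge1[OF th RL] by simp
  have w0: "\<And>M. w M \<ge> 0" by (simp add: w_def)
  have sw0: "(\<Sum>M\<in>?PM. w M) \<ge> 0" by (rule sum_nonneg) (simp add: w0)
  have RHS: "(\<Sum>M\<in>?PM. w M * Fd \<theta> Hs k (snd (snd s))) = Fs * (\<Sum>M\<in>?PM. w M)"
    by (simp add: seq Fs_def sum_distrib_left mult.commute)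
  have goal: "(\<Sum>M\<in>?PM. w M * EG \<theta> Hs k M s) \<le> ?Q * (Fs * (\<Sum>M\<in>?PM. w M))"
  proof (cases "\<forall>M\<in>?PM. w M = 0")
    case True
    then show ?thesis by simp
  next
    case False
    then obtain M0 where M0: "M0 \<in> ?PM" "w M0 \<noteq> 0" by blast
    have sup0: "s \<in> set_pmf (Ej Hs N j M0)" using M0 by (simp add: w_def set_pmf_eq)
    have I0: "inv0 Hs N j (act, sl, disc)" using inv0_Ej[OF sup0] seq by simp
    have J0: "invM Hs N M0 (act, sl, disc)" using invM_Ej[OF M0(1) sup0] seq by simp
    have sleq: "sl = {x \<in> ?A. fst x \<notin> set disc}" using J0 by (simp add: invM_def)
    have slA: "sl \<subseteq> ?A" using sleq by blast
    have finsl: "finite sl" using finite_subset[OF slA] by simp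
    have sld: "\<forall>x\<in>sl. fst x \<notin> set disc" and actd: "\<forall>a\<in>set act. fst a \<in> set disc"
      and len: "length disc = j \<or> (act = [] \<and> sl = {} \<and> length disc \<le> j)"
      using I0 by (simp_all add: inv0_def)
    have gsl: "length disc < k \<Longrightarrow> (\<Sum>h\<in>sl. exp (\<theta> * csize (Hs (fst h)))) / card sl \<le> qq \<theta> R Hs N"
      unfolding qq_def by (rule gsl_bound[OF th sleq _ Rc RL]) simp
    show ?thesis
    proof (cases act)
      case (Cons a act')
      have lenj: "length disc = j" using len Cons by auto
      have EGa: "\<And>M. EG \<theta> Hs k M s = Fd \<theta> Hs k (disc @ [fst (M a)])"
        by (simp add: EG_def seq Cons)
      show ?thesis
      proof (cases "j < k")
        case False
        have "(\<Sum>M\<in>?PM. w M * EG \<theta> Hs k M s) = (\<Sum>M\<in>?PM. w M * Fs)"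
          using False lenj by (simp add: EGa Fd_snoc_ge Fs_def)
        also have "\<dots> = Fs * (\<Sum>M\<in>?PM. w M)" by (simp add: sum_distrib_left mult.commute)
        also have "\<dots> \<le> ?Q * (Fs * (\<Sum>M\<in>?PM. w M))"
          using Q1 Fs0 sw0 by (intro le_Q) simp_all
        finally show ?thesis .
      next
        case True
        let ?\<phi> = "\<lambda>b. exp (\<theta> * csize (Hs (fst b)))"
        have aA: "a \<notin> sl" using actd sld Cons by auto
        have wS: "M a \<in> sl" if M: "M \<in> ?PM" "w M \<noteq> 0" for M
        proof -
          have sup: "s \<in> set_pmf (Ej Hs N j M)" using M by (simp add: w_def set_pmf_eq)
          have J: "invM Hs N M (act, sl, disc)" using invM_Ej[OF M(1) sup] seq by simp
          have "set act \<subseteq> ?A" "fst (M a) \<notin> set disc" using J Cons by (simp_all add: invM_def)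
          hence "a \<in> ?A" using Cons by simp
          hence "M a \<in> ?A" by (rule pm_D(1)[OF M(1)])
          thus "M a \<in> sl" using sleq \<open>fst (M a) \<notin> set disc\<close> by simp
        qed
        have ne: "sl \<noteq> {}" using wS[OF M0] by blast
        have ss: "(\<Sum>M\<in>?PM. w M * ?\<phi> (M a)) = (\<Sum>b\<in>sl. ?\<phi> b) / card sl * (\<Sum>M\<in>?PM. w M)"
        proof (rule sym_sum[OF finPM finsl ne wS])
          fix b b' M assume b: "b \<in> sl" "b' \<in> sl" and M: "M \<in> ?PM"
          show "cj b b' M \<in> ?PM" using cj_pm[OF M] b slA by blast
          show "w (cj b b' M) = w M" unfolding w_def by (rule Ej_swap) (use b seq in auto)
          show "cj b b' M a = tr b b' (M a)" by (rule cj_app) (use aA b in auto)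
        qed auto
        have "(\<Sum>M\<in>?PM. w M * EG \<theta> Hs k M s) = Fs * (\<Sum>M\<in>?PM. w M * ?\<phi> (M a))"
          using True lenj by (simp add: EGa Fd_snoc_lt Fs_def sum_distrib_left mult_ac)
        also have "\<dots> = Fs * ((\<Sum>b\<in>sl. ?\<phi> b) / card sl * (\<Sum>M\<in>?PM. w M))" by (simp add: ss)
        also have "\<dots> \<le> Fs * (qq \<theta> R Hs N * (\<Sum>M\<in>?PM. w M))"
          using mult_right_mono[OF gsl sw0] True lenj Fs0 by (intro mult_left_mono) simp_all
        finally show ?thesis using True by (simp add: mult_ac)
      qed
    next
      case Nil
      show ?thesis
      proof (cases "sl = {}")
        case True
        have "(\<Sum>M\<in>?PM. w M * EG \<theta> Hs k M s) = Fs * (\<Sum>M\<in>?PM. w M)"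
          using True Nil by (simp add: EG_def seq Fs_def sum_distrib_left mult.commute)
        also have "\<dots> \<le> ?Q * (Fs * (\<Sum>M\<in>?PM. w M))"
          using Q1 Fs0 sw0 by (intro le_Q) simp_all
        finally show ?thesis .
      next
        case False
        have lenj: "length disc = j" using len False by auto
        have cp: "real (card sl) > 0" using False finsl by (simp add: card_gt_0_iff)
        define G where "G = (\<Sum>h\<in>sl. Fd \<theta> Hs k (disc @ [fst h])) / card sl"
        have EGr: "\<And>M. EG \<theta> Hs k M s = G" by (simp add: EG_def seq Nil False G_def)
        have GQ: "G \<le> ?Q * Fs"
        proof (cases "j < k")
          case True
          have "G = Fs * ((\<Sum>h\<in>sl. exp (\<theta> * csize (Hs (fst h)))) / card sl)"
            using True lenj by (simp add: G_def Fd_snoc_lt Fs_def sum_distrib_left)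
          also have "\<dots> \<le> Fs * qq \<theta> R Hs N" using gsl True lenj Fs0 by (intro mult_left_mono) simp_all
          finally show ?thesis using True by (simp add: mult.commute)
        next
          case False
          have "G = Fs" using False lenj cp by (simp add: G_def Fd_snoc_ge Fs_def)
          thus ?thesis using Q1 Fs0 False by simp
        qed
        have "(\<Sum>M\<in>?PM. w M * EG \<theta> Hs k M s) = G * (\<Sum>M\<in>?PM. w M)"
          by (simp add: EGr sum_distrib_left mult.commute)
        also have "\<dots> \<le> ?Q * Fs * (\<Sum>M\<in>?PM. w M)" by (rule mult_right_mono[OF GQ sw0])
        finally show ?thesis by (simp add: mult_ac)
      qed
    qed
  qed
  show ?thesis using goal RHS unfolding w_def by simp
qed



lemma EG_nonneg: "EG \<theta> Hs k M s \<ge> 0"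
proof -
  obtain act sl disc where seq: "s = (act, sl, disc)" by (cases s) auto
  have "(\<Sum>h\<in>sl. Fd \<theta> Hs k (disc @ [fst h])) / card sl \<ge> 0"
    by (intro divide_nonneg_nonneg sum_nonneg less_imp_le[OF Fd_pos]) simp
  then show ?thesis unfolding seq EG_def
    by (cases act) (simp_all add: less_imp_le[OF Fd_pos])
qed

definition Phi :: "real \<Rightarrow> (nat \<Rightarrow> community) \<Rightarrow> nat \<Rightarrow> nat \<Rightarrow> nat \<Rightarrow> ennreal" where
  "Phi \<theta> Hs N k j = (\<Sum>M\<in>perfect_matchings (hcm_hedges Hs N).
      \<integral>\<^sup>+ s. ennreal (Fd \<theta> Hs k (snd (snd s))) \<partial>Ej Hs N j M)"

lemma Phi_step:
  fixes \<theta> R :: real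
  assumes th: "\<theta> \<ge> 0"
    and Rc: "\<forall>D\<subseteq>{..<N}. card D \<le> k \<longrightarrow> real (\<Sum>c\<in>D. cdeg (Hs c)) \<le> R"
    and RL: "R < card (hcm_hedges Hs N)"
    and finPM: "finite (perfect_matchings (hcm_hedges Hs N))"
  shows "Phi \<theta> Hs N k (Suc j) \<le> ennreal (if j < k then qq \<theta> R Hs N else 1) * Phi \<theta> Hs N k j"
proof -
  let ?PM = "perfect_matchings (hcm_hedges Hs N)"
  let ?Q = "if j < k then qq \<theta> R Hs N else 1"
  let ?F = "\<lambda>s. Fd \<theta> Hs k (snd (snd s))"
  have Q0: "?Q \<ge> 0" using qq_ge1[OF th RL] by simp
  have "Phi \<theta> Hs N k (Suc j) = (\<Sum>M\<in>?PM. \<integral>\<^sup>+ s. \<integral>\<^sup>+ s'. ennreal (?F s') \<partial>explore_step Hs M s \<partial>Ej Hs N j M)"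
    by (simp add: Phi_def Ej_Suc)
  also have "\<dots> = (\<Sum>M\<in>?PM. \<integral>\<^sup>+ s. ennreal (EG \<theta> Hs k M s) \<partial>Ej Hs N j M)"
  proof (rule sum.cong[OF refl], rule nn_integral_cong_AE)
    fix M
    show "AE s in measure_pmf (Ej Hs N j M). (\<integral>\<^sup>+ s'. ennreal (?F s') \<partial>explore_step Hs M s) = ennreal (EG \<theta> Hs k M s)"
    proof (unfold AE_measure_pmf_iff, intro ballI)
      fix s assume s: "s \<in> set_pmf (Ej Hs N j M)"
      obtain act sl disc where seq: "s = (act, sl, disc)" by (cases s) auto
      have "sl \<subseteq> hcm_hedges Hs N" using inv0_Ej[OF s] seq by (simp add: inv0_def)
      hence "finite sl" using finite_subset[OF _ finite_hcm_hedges] by blast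
      thus "(\<integral>\<^sup>+ s'. ennreal (?F s') \<partial>explore_step Hs M s) = ennreal (EG \<theta> Hs k M s)"
        unfolding seq by (rule nn_step)
    qed
  qed
  also have "\<dots> = (\<Sum>M\<in>?PM. \<integral>\<^sup>+ s. ennreal (pmf (Ej Hs N j M) s * EG \<theta> Hs k M s) \<partial>count_space UNIV)"
    by (simp add: nn_integral_measure_pmf ennreal_mult EG_nonneg)
  also have "\<dots> = (\<integral>\<^sup>+ s. (\<Sum>M\<in>?PM. ennreal (pmf (Ej Hs N j M) s * EG \<theta> Hs k M s)) \<partial>count_space UNIV)"
    by (rule nn_integral_sum[symmetric]) simp
  also have "\<dots> = (\<integral>\<^sup>+ s. ennreal (\<Sum>M\<in>?PM. pmf (Ej Hs N j M) s * EG \<theta> Hs k M s) \<partial>count_space UNIV)"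
    by (rule nn_integral_cong) (simp add: sum_ennreal EG_nonneg)
  also have "\<dots> \<le> (\<integral>\<^sup>+ s. ennreal (?Q * (\<Sum>M\<in>?PM. pmf (Ej Hs N j M) s * ?F s)) \<partial>count_space UNIV)"
  proof (rule nn_integral_mono)
    fix s
    show "ennreal (\<Sum>M\<in>?PM. pmf (Ej Hs N j M) s * EG \<theta> Hs k M s)
       \<le> ennreal (?Q * (\<Sum>M\<in>?PM. pmf (Ej Hs N j M) s * ?F s))"
      using state_claim[OF th Rc RL finPM, of j s] by (rule ennreal_leI)
  qed
  also have "\<dots> = (\<integral>\<^sup>+ s. ennreal ?Q * (\<Sum>M\<in>?PM. ennreal (pmf (Ej Hs N j M) s * ?F s)) \<partial>count_space UNIV)"
  proof (rule nn_integral_cong)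
    fix s
    have nn: "(\<Sum>M\<in>?PM. pmf (Ej Hs N j M) s * ?F s) \<ge> 0"
      by (intro sum_nonneg mult_nonneg_nonneg less_imp_le[OF Fd_pos]) simp_all
    have "ennreal (?Q * (\<Sum>M\<in>?PM. pmf (Ej Hs N j M) s * ?F s))
        = ennreal ?Q * ennreal (\<Sum>M\<in>?PM. pmf (Ej Hs N j M) s * ?F s)"
      by (rule ennreal_mult[OF Q0 nn])
    also have "ennreal (\<Sum>M\<in>?PM. pmf (Ej Hs N j M) s * ?F s) = (\<Sum>M\<in>?PM. ennreal (pmf (Ej Hs N j M) s * ?F s))"
      by (rule sum_ennreal[symmetric]) (intro mult_nonneg_nonneg less_imp_le[OF Fd_pos]; simp)
    finally show "ennreal (?Q * (\<Sum>M\<in>?PM. pmf (Ej Hs N j M) s * ?F s)) = ennreal ?Q * (\<Sum>M\<in>?PM. ennreal (pmf (Ej Hs N j M) s * ?F s))" .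
  qed
  also have "\<dots> = ennreal ?Q * (\<integral>\<^sup>+ s. (\<Sum>M\<in>?PM. ennreal (pmf (Ej Hs N j M) s * ?F s)) \<partial>count_space UNIV)"
    by (rule nn_integral_cmult) simp
  also have "(\<integral>\<^sup>+ s. (\<Sum>M\<in>?PM. ennreal (pmf (Ej Hs N j M) s * ?F s)) \<partial>count_space UNIV)
      = (\<Sum>M\<in>?PM. \<integral>\<^sup>+ s. ennreal (pmf (Ej Hs N j M) s * ?F s) \<partial>count_space UNIV)"
    by (rule nn_integral_sum) simp
  also have "\<dots> = Phi \<theta> Hs N k j"
    by (simp add: Phi_def nn_integral_measure_pmf ennreal_mult less_imp_le[OF Fd_pos])
  finally show ?thesis .
qed

lemma Phi_0: "Phi \<theta> Hs N k 0 = of_nat (card (perfect_matchings (hcm_hedges Hs N)))"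
  by (simp add: Phi_def Ej_0 Fd_def first_sizes_sum_def)

lemma Phi_bound:
  fixes \<theta> R :: real
  assumes th: "\<theta> \<ge> 0"
    and Rc: "\<forall>D\<subseteq>{..<N}. card D \<le> k \<longrightarrow> real (\<Sum>c\<in>D. cdeg (Hs c)) \<le> R"
    and RL: "R < card (hcm_hedges Hs N)"
    and finPM: "finite (perfect_matchings (hcm_hedges Hs N))"
  shows "Phi \<theta> Hs N k j \<le> ennreal (qq \<theta> R Hs N ^ min j k) * of_nat (card (perfect_matchings (hcm_hedges Hs N)))"
proof (induction j)
  case 0
  then show ?case by (simp add: Phi_0)
next
  case (Suc j)
  let ?q = "qq \<theta> R Hs N"
  let ?c = "of_nat (card (perfect_matchings (hcm_hedges Hs N))) :: ennreal"
  have q1: "?q \<ge> 1" by (rule qq_ge1[OF th RL])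
  have "Phi \<theta> Hs N k (Suc j) \<le> ennreal (if j < k then ?q else 1) * Phi \<theta> Hs N k j"
    by (rule Phi_step[OF th Rc RL finPM])
  also have "\<dots> \<le> ennreal (if j < k then ?q else 1) * (ennreal (?q ^ min j k) * ?c)"
    by (rule mult_left_mono[OF Suc.IH]) simp
  also have "\<dots> = ennreal ((if j < k then ?q else 1) * ?q ^ min j k) * ?c"
    using q1 by (simp add: ennreal_mult mult.assoc)
  also have "(if j < k then ?q else 1) * ?q ^ min j k = ?q ^ min (Suc j) k"
    by (cases "j < k") (auto simp: min_def)
  finally show ?case .
qed



lemma pm_out: "M \<in> perfect_matchings A \<Longrightarrow> h \<notin> A \<Longrightarrow> M h = h"
  unfolding perfect_matchings_def by blast

lemma finite_pm:
  assumes "finite A"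
  shows "finite (perfect_matchings A)"
proof -
  let ?f = "\<lambda>M. restrict M A"
  have "?f ` perfect_matchings A \<subseteq> (\<Pi>\<^sub>E x\<in>A. A)"
    by (auto simp: perfect_matchings_def)
  moreover have "finite (\<Pi>\<^sub>E x\<in>A. A)" using finite_PiE[OF assms assms] .
  ultimately have "finite (?f ` perfect_matchings A)" by (rule finite_subset)
  moreover have "inj_on ?f (perfect_matchings A)"
  proof (rule inj_onI)
    fix M M' assume M: "M \<in> perfect_matchings A" and M': "M' \<in> perfect_matchings A"
      and eq: "restrict M A = restrict M' A"
    show "M = M'"
    proof
      fix x show "M x = M' x"
      proof (cases "x \<in> A")
        case True then show ?thesis using fun_cong[OF eq, of x] by simp
      next
        case False
        then show ?thesis using pm_out[OF M False] pm_out[OF M' False] by simp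
      qed
    qed
  qed
  ultimately show ?thesis by (rule finite_imageD)
qed

lemma pm_exists:
  assumes "finite A" "even (card A)"
  shows "perfect_matchings A \<noteq> {}"
  using assms
proof (induction "card A" arbitrary: A rule: less_induct)
  case less
  show ?case
  proof (cases "A = {}")
    case True
    have "id \<in> perfect_matchings A" using True by (simp add: perfect_matchings_def)
    thus ?thesis by blast
  next
    case False
    then obtain x where x: "x \<in> A" by blast
    have fin: "finite A" by (rule less.prems(1))
    have c0: "card A > 0" using False fin by (simp add: card_gt_0_iff)
    have c2: "card A \<ge> 2"
    proof (rule ccontr)
      assume "\<not> card A \<ge> 2"
      hence "card A = 1" using c0 by simp
      thus False using less.prems(2) by simp
    qed
    have c1: "card (A - {x}) = card A - 1" using x fin by (simp add: card_Diff_singleton)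
    hence "card (A - {x}) > 0" using c2 by simp
    hence "A - {x} \<noteq> {}" by (metis card.empty less_irrefl)
    then obtain y where y: "y \<in> A - {x}" by blast
    let ?A' = "A - {x, y}"
    have "?A' = (A - {x}) - {y}" by blast
    hence cA': "card ?A' = card A - 2" using c1 y fin by (simp add: card_Diff_singleton)
    have lt: "card ?A' < card A" using cA' c0 by simp
    have ev: "even (card ?A')" using cA' less.prems(2) c2 by simp
    have finA': "finite ?A'" using fin by simp
    have "perfect_matchings ?A' \<noteq> {}" by (rule less.hyps[OF lt finA' ev])
    then obtain M' where M': "M' \<in> perfect_matchings ?A'" by blast
    define M where "M = M'(x := y, y := x)"
    have xy: "x \<noteq> y" "y \<in> A" using y by auto
    have "M \<in> perfect_matchings A"
      unfolding perfect_matchings_def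
    proof (intro CollectI conjI ballI allI impI)
      fix h assume h: "h \<in> A"
      show "M h \<in> A" "M h \<noteq> h" "M (M h) = h"
      proof -
        have "(M h \<in> A \<and> M h \<noteq> h \<and> M (M h) = h)"
        proof (cases "h = x \<or> h = y")
          case True then show ?thesis using xy x by (auto simp: M_def)
        next
          case False
          hence hA': "h \<in> ?A'" using h by auto
          have "M' h \<in> ?A'" "M' h \<noteq> h" "M' (M' h) = h" using pm_D[OF M' hA'] by auto
          then show ?thesis using False by (auto simp: M_def)
        qed
        thus "M h \<in> A" "M h \<noteq> h" "M (M h) = h" by auto
      qed
    next
      fix h assume h: "h \<notin> A"
      hence hn: "h \<notin> ?A'" "h \<noteq> x" "h \<noteq> y" using x xy by auto
      have "M' h = h" by (rule pm_out[OF M' hn(1)])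
      thus "M h = h" using hn by (simp add: M_def)
    qed
    thus ?thesis by blast
  qed
qed

lemma prob_bound:
  fixes \<theta> R t :: real
  assumes th: "\<theta> \<ge> 0"
    and Rc: "\<forall>D\<subseteq>{..<n}. card D \<le> k \<longrightarrow> real (\<Sum>c\<in>D. cdeg (Hs c)) \<le> R"
    and RL: "R < card (hcm_hedges Hs n)"
    and ev: "even (card (hcm_hedges Hs n))"
  shows "measure_pmf.prob (hcm_exploration Hs n) {d. real (first_sizes_sum Hs k d) > t}
     \<le> qq \<theta> R Hs n ^ k * exp (- \<theta> * t)"
proof -
  let ?PM = "perfect_matchings (hcm_hedges Hs n)"
  let ?q = "qq \<theta> R Hs n"
  let ?X = "\<lambda>d. real (first_sizes_sum Hs k d)"
  let ?S = "{d. ?X d > t}"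
  have finPM: "finite ?PM" by (rule finite_pm) simp
  have nePM: "?PM \<noteq> {}" by (rule pm_exists[OF _ ev]) simp
  have cpos: "card ?PM > 0" using finPM nePM by (simp add: card_gt_0_iff)
  have q1: "?q \<ge> 1" by (rule qq_ge1[OF th RL])
  have E: "(\<integral>\<^sup>+ d. ennreal (exp (\<theta> * ?X d)) \<partial>hcm_exploration Hs n) = Phi \<theta> Hs n k n / of_nat (card ?PM)"
    unfolding hcm_exploration_def
    by (simp add: nn_integral_pmf_of_set[OF nePM finPM] Phi_def explore_dist_Ej Fd_def)
  also have "\<dots> \<le> (ennreal (?q ^ min n k) * of_nat (card ?PM)) / of_nat (card ?PM)"
    by (rule divide_right_mono_ennreal[OF Phi_bound[OF th Rc RL finPM]])
  also have "\<dots> = ennreal (?q ^ min n k)"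
    by (rule mult_divide_eq_ennreal) (use cpos in auto)
  also have "\<dots> \<le> ennreal (?q ^ k)"
    using q1 by (intro ennreal_leI power_increasing) auto
  finally have Eb: "(\<integral>\<^sup>+ d. ennreal (exp (\<theta> * ?X d)) \<partial>hcm_exploration Hs n) \<le> ennreal (?q ^ k)" .
  have "emeasure (hcm_exploration Hs n) ?S = (\<integral>\<^sup>+ d. indicator ?S d \<partial>hcm_exploration Hs n)"
    by simp
  also have "\<dots> \<le> (\<integral>\<^sup>+ d. ennreal (exp (\<theta> * ?X d)) * ennreal (exp (- \<theta> * t)) \<partial>hcm_exploration Hs n)"
  proof (rule nn_integral_mono)
    fix d
    show "indicator ?S d \<le> ennreal (exp (\<theta> * ?X d)) * ennreal (exp (- \<theta> * t))"
    proof (cases "d \<in> ?S")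
      case True
      hence "\<theta> * t \<le> \<theta> * ?X d" using th by (simp add: mult_left_mono)
      hence "1 \<le> exp (\<theta> * ?X d) * exp (- \<theta> * t)" by (simp add: exp_minus field_simps)
      hence "ennreal 1 \<le> ennreal (exp (\<theta> * ?X d) * exp (- \<theta> * t))" by (rule ennreal_leI)
      thus ?thesis using True by (simp add: ennreal_mult)
    qed simp
  qed
  also have "\<dots> = (\<integral>\<^sup>+ d. ennreal (exp (\<theta> * ?X d)) \<partial>hcm_exploration Hs n) * ennreal (exp (- \<theta> * t))"
    by (rule nn_integral_multc) simp
  also have "\<dots> \<le> ennreal (?q ^ k) * ennreal (exp (- \<theta> * t))"
    by (rule mult_right_mono[OF Eb]) simp
  also have "\<dots> = ennreal (?q ^ k * exp (- \<theta> * t))"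
    using q1 by (simp add: ennreal_mult)
  finally have "ennreal (measure_pmf.prob (hcm_exploration Hs n) ?S) \<le> ennreal (?q ^ k * exp (- \<theta> * t))"
    by (simp add: measure_pmf.emeasure_eq_measure)
  thus ?thesis using q1 by (simp add: ennreal_le_iff)
qed



lemma pmf_exp_approx:
  fixes P :: "'a pmf" and f :: "'a \<Rightarrow> real"
  assumes int: "integrable (measure_pmf P) f" and e: "\<epsilon> > 0"
  shows "\<exists>F. finite F \<and> (\<Sum>C\<in>F. pmf P C * f C) > measure_pmf.expectation P f - \<epsilon>"
proof -
  let ?g = "\<lambda>C. pmf P C * f C"
  have i2: "integrable (count_space UNIV) (\<lambda>x. pmf P x *\<^sub>R f x)"
    using int unfolding measure_pmf_eq_density
    by (subst (asm) integrable_density) (auto simp: pmf_nonneg)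
  hence as: "Infinite_Set_Sum.abs_summable_on ?g UNIV" by (simp add: abs_summable_on_def)
  have E: "measure_pmf.expectation P f = infsetsum ?g UNIV" by (rule pmf_expectation_eq_infsetsum)
  also have "\<dots> = infsum ?g UNIV" by (rule infsetsum_infsum[OF as])
  finally have E2: "measure_pmf.expectation P f = infsum ?g UNIV" .
  have "?g summable_on UNIV" by (rule abs_summable_summable, rule abs_summable_equivalent[THEN iffD2, OF as])
  hence "HAS_SUM ?g UNIV (infsum ?g UNIV)" by (rule has_sum_infsum)
  hence lim: "(sum ?g \<longlongrightarrow> measure_pmf.expectation P f) (finite_subsets_at_top UNIV)"
    unfolding has_sum_def E2 .
  have "eventually (\<lambda>F. sum ?g F > measure_pmf.expectation P f - \<epsilon>) (finite_subsets_at_top UNIV)"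
    using order_tendstoD(1)[OF lim] e by simp
  then obtain X where "finite X" "\<forall>Y. finite Y \<and> X \<subseteq> Y \<and> Y \<subseteq> UNIV \<longrightarrow> sum ?g Y > measure_pmf.expectation P f - \<epsilon>"
    unfolding eventually_finite_subsets_at_top by blast
  thus ?thesis by blast
qed


lemma emp_lower:
  fixes f :: "community \<Rightarrow> real"
  assumes n: "n > 0" and F: "finite F" and f0: "\<And>C. f C \<ge> 0"
  shows "(\<Sum>C\<in>F. f C * (real (card {i. i < n \<and> Hs i = C}) / real n)) \<le> emp_mean Hs n f"
proof -
  let ?S = "{i. i < n \<and> Hs i \<in> F}"
  have finS: "finite ?S" by simp
  have "(\<Sum>C\<in>F. sum (\<lambda>i. f (Hs i)) {x \<in> ?S. Hs x = C}) = sum (\<lambda>i. f (Hs i)) ?S"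
    by (rule sum.group[OF finS F]) auto
  moreover have inner: "\<And>C. C \<in> F \<Longrightarrow> sum (\<lambda>i. f (Hs i)) {x \<in> ?S. Hs x = C} = f C * real (card {i. i < n \<and> Hs i = C})"
  proof -
    fix C assume C: "C \<in> F"
    have eq: "{x \<in> ?S. Hs x = C} = {i. i < n \<and> Hs i = C}" using C by auto
    have "sum (\<lambda>i. f (Hs i)) {i. i < n \<and> Hs i = C} = sum (\<lambda>i. f C) {i. i < n \<and> Hs i = C}"
      by (rule sum.cong) auto
    thus "sum (\<lambda>i. f (Hs i)) {x \<in> ?S. Hs x = C} = f C * real (card {i. i < n \<and> Hs i = C})"
      unfolding eq by simp
  qed
  ultimately have 1: "(\<Sum>C\<in>F. f C * real (card {i. i < n \<and> Hs i = C})) = sum (\<lambda>i. f (Hs i)) ?S"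
    by (metis (no_types, lifting) sum.cong)
  have "sum (\<lambda>i. f (Hs i)) ?S \<le> (\<Sum>i<n. f (Hs i))"
    by (rule sum_mono2) (auto simp: f0)
  hence "(\<Sum>C\<in>F. f C * real (card {i. i < n \<and> Hs i = C})) / real n \<le> (\<Sum>i<n. f (Hs i)) / real n"
    using 1 n by (simp add: divide_right_mono)
  thus ?thesis unfolding emp_mean_def by (simp add: sum_divide_distrib)
qed

lemma emp_liminf:
  fixes H :: "nat \<Rightarrow> nat \<Rightarrow> community" and P :: "community pmf" and f :: "community \<Rightarrow> real"
  assumes reg_i: "\<forall>C. (\<lambda>n. real (card {i. i < n \<and> H n i = C}) / real n) \<longlonglongrightarrow> pmf P C"
    and int: "integrable (measure_pmf P) f" and f0: "\<And>C. f C \<ge> 0" and e: "\<epsilon> > 0"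
  shows "\<forall>\<^sub>F n in sequentially. emp_mean (H n) n f > measure_pmf.expectation P f - \<epsilon>"
proof -
  obtain F where F: "finite F" "(\<Sum>C\<in>F. pmf P C * f C) > measure_pmf.expectation P f - \<epsilon>"
    using pmf_exp_approx[OF int e] by blast
  have lim: "(\<lambda>n. \<Sum>C\<in>F. f C * (real (card {i. i < n \<and> H n i = C}) / real n)) \<longlonglongrightarrow> (\<Sum>C\<in>F. f C * pmf P C)"
    by (intro tendsto_sum tendsto_mult_left) (use reg_i in blast)
  have "(\<Sum>C\<in>F. f C * pmf P C) > measure_pmf.expectation P f - \<epsilon>" using F(2) by (simp add: mult.commute)
  hence ev: "\<forall>\<^sub>F n in sequentially. (\<Sum>C\<in>F. f C * (real (card {i. i < n \<and> H n i = C}) / real n)) > measure_pmf.expectation P f - \<epsilon>"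
    by (rule order_tendstoD(1)[OF lim])
  have "\<forall>\<^sub>F n in sequentially. n > 0" by (rule eventually_gt_at_top)
  with ev show ?thesis
  proof (rule eventually_elim2)
    fix n assume a: "(\<Sum>C\<in>F. f C * (real (card {i. i < n \<and> H n i = C}) / real n)) > measure_pmf.expectation P f - \<epsilon>"
      and n: "n > 0"
    show "emp_mean (H n) n f > measure_pmf.expectation P f - \<epsilon>"
      using a emp_lower[where Hs = "H n" and f = f, OF n F(1) f0] by linarith
  qed
qed

lemma exp_le2: "0 \<le> (x::real) \<Longrightarrow> x \<le> 1 \<Longrightarrow> exp x - 1 \<le> 2 * x"
proof -
  assume a: "0 \<le> x" "x \<le> 1"
  have "exp x \<le> 1 + x + x^2" by (rule exp_bound[OF a])
  moreover have "x^2 \<le> x" using a by (simp add: power2_eq_square mult_left_le)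
  ultimately show ?thesis by simp
qed

lemma sum_hedges:
  fixes g :: "nat \<Rightarrow> real"
  shows "(\<Sum>h\<in>hcm_hedges Hs n. g (fst h)) = (\<Sum>i<n. real (cdeg (Hs i)) * g i)"
proof -
  have "(\<Sum>h\<in>hcm_hedges Hs n. g (fst h)) = (\<Sum>i<n. \<Sum>h\<in>comm_hedges Hs i. g (fst h))"
    unfolding hcm_hedges_def by (rule sum.UNION_disjoint) (auto dest: comm_hedges_fst)
  also have "\<dots> = (\<Sum>i<n. \<Sum>h\<in>comm_hedges Hs i. g i)"
    by (intro sum.cong refl) (auto dest: comm_hedges_fst)
  also have "\<dots> = (\<Sum>i<n. real (cdeg (Hs i)) * g i)" by (simp add: card_comm_hedges)
  finally show ?thesis .
qed

lemma d_le_K: "0 \<le> (d::real) \<Longrightarrow> 0 < K \<Longrightarrow> d \<le> K + d^3 / K^2"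
proof -
  assume d: "0 \<le> d" and K: "0 < K"
  show ?thesis
  proof (cases "d \<le> K")
    case True
    have "d^3 / K^2 \<ge> 0" using d by simp
    then show ?thesis using True by linarith
  next
    case False
    hence "K^2 \<le> d^2" using K by (simp add: power_mono)
    hence "d * K^2 \<le> d * d^2" using d by (simp add: mult_left_mono)
    hence "d \<le> d^3 / K^2" using K by (simp add: field_simps power3_eq_cube power2_eq_square)
    then show ?thesis using K by linarith
  qed
qed



lemma smax_facts:
  assumes n: "n > 0" and comm: "\<forall>i<n. is_community (Hs i)"
  shows "\<And>i. i < n \<Longrightarrow> csize (Hs i) \<le> hcm_smax Hs n" "hcm_smax Hs n \<ge> 1"
proof -
  have fin: "finite (csize ` Hs ` {..<n})" by simp
  show le: "\<And>i. i < n \<Longrightarrow> csize (Hs i) \<le> hcm_smax Hs n"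
    unfolding hcm_smax_def by (rule Max_ge[OF fin]) auto
  have "csize (Hs 0) \<ge> 1" using comm n by (simp add: is_community_def)
  thus "hcm_smax Hs n \<ge> 1" using le[OF n] by simp
qed

lemma bound_n:
  fixes Hs :: "nat \<Rightarrow> community" and \<eta> \<delta> \<mu> \<nu> \<epsilon> K D' \<zeta> :: real
  assumes n: "n > 0" and comm: "\<forall>i<n. is_community (Hs i)" and ev: "even (\<Sum>i<n. cdeg (Hs i))"
    and eta: "\<eta> > 0" and eps: "0 < \<epsilon>" and epsnu: "2 * \<epsilon> < \<nu>"
    and K1: "K \<ge> 1" and E3: "emp_mean Hs n (\<lambda>C. real (cdeg C) ^ 3) / K^2 \<le> \<epsilon> / 2"
    and DSb: "emp_mean Hs n (\<lambda>C. real (cdeg C) * real (csize C)) \<le> \<mu> + \<epsilon>"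
    and Db: "emp_mean Hs n (\<lambda>C. real (cdeg C)) > \<nu> - \<epsilon>"
    and kb: "\<eta> * K * real n powr (2/3) / real n \<le> \<epsilon> / 2"
    and gD: "2 * \<eta> * (\<mu> + \<epsilon>) / (\<nu> - 2 * \<epsilon>) \<le> D'"
    and zeta: "\<zeta> = \<delta> - D'"
  shows "measure_pmf.prob (hcm_exploration Hs n)
             {disc. real (first_sizes_sum Hs (nat \<lfloor>\<eta> * real n powr (2/3)\<rfloor>) disc) > \<delta> * real n powr (2/3)}
           \<le> exp (- \<zeta> * real n powr (2/3) / real (hcm_smax Hs n))"
proof -
  define p where "p = real n powr (2/3)"
  define k where "k = nat \<lfloor>\<eta> * p\<rfloor>"
  define sm where "sm = real (hcm_smax Hs n)"
  define \<theta> where "\<theta> = 1 / sm"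
  define d where "d i = real (cdeg (Hs i))" for i
  define s where "s i = real (csize (Hs i))" for i
  define S3 where "S3 = (\<Sum>i<n. d i ^ 3)"
  define R where "R = real k * K + S3 / K^2"
  define L where "L = real (card (hcm_hedges Hs n))"
  define DS where "DS = (\<Sum>i<n. d i * s i)"
  have np: "real n > 0" using n by simp
  have pp: "p > 0" unfolding p_def using n by simp
  have d0: "\<And>i. d i \<ge> 0" by (simp add: d_def)
  have s0: "\<And>i. s i \<ge> 0" by (simp add: s_def)
  have sm1: "sm \<ge> 1" unfolding sm_def using smax_facts(2)[OF n comm] by simp
  have ssm: "\<And>i. i < n \<Longrightarrow> s i \<le> sm" unfolding s_def sm_def using smax_facts(1)[OF n comm] by simp
  have th0: "\<theta> \<ge> 0" unfolding \<theta>_def using sm1 by simp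
  have kle: "real k \<le> \<eta> * p"
  proof -
    have "\<eta> * p \<ge> 0" using eta pp by simp
    thus ?thesis unfolding k_def by linarith
  qed
  have K0: "K > 0" using K1 by simp
  have Ldef: "L = (\<Sum>i<n. d i)" unfolding L_def d_def by (simp add: card_hcm_hedges)
  have LE: "L = real n * emp_mean Hs n (\<lambda>C. real (cdeg C))"
    unfolding Ldef emp_mean_def d_def using np by simp
  have S3E: "S3 = real n * emp_mean Hs n (\<lambda>C. real (cdeg C) ^ 3)"
    unfolding S3_def emp_mean_def d_def using np by simp
  have DSE: "DS = real n * emp_mean Hs n (\<lambda>C. real (cdeg C) * real (csize C))"
    unfolding DS_def emp_mean_def d_def s_def using np by simp
  have Rc: "\<forall>D\<subseteq>{..<n}. card D \<le> k \<longrightarrow> real (\<Sum>c\<in>D. cdeg (Hs c)) \<le> R"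
  proof (intro allI impI)
    fix D assume D: "D \<subseteq> {..<n}" and cD: "card D \<le> k"
    have finD: "finite D" using D finite_subset by blast
    have "real (\<Sum>c\<in>D. cdeg (Hs c)) = (\<Sum>c\<in>D. d c)" by (simp add: d_def)
    also have "\<dots> \<le> (\<Sum>c\<in>D. K + d c ^ 3 / K^2)" by (rule sum_mono) (rule d_le_K[OF d0 K0])
    also have "\<dots> = real (card D) * K + (\<Sum>c\<in>D. d c ^ 3) / K^2"
      by (simp add: sum.distrib sum_divide_distrib)
    also have "\<dots> \<le> real k * K + S3 / K^2"
    proof (rule add_mono)
      show "real (card D) * K \<le> real k * K" using cD K0 by simp
      have "(\<Sum>c\<in>D. d c ^ 3) \<le> S3" unfolding S3_def
        by (rule sum_mono2) (use D d0 in auto)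
      thus "(\<Sum>c\<in>D. d c ^ 3) / K^2 \<le> S3 / K^2" by (simp add: divide_right_mono)
    qed
    finally show "real (\<Sum>c\<in>D. cdeg (Hs c)) \<le> R" unfolding R_def .
  qed
  have Rb: "R \<le> real n * \<epsilon>"
  proof -
    have "real k * K \<le> \<eta> * p * K" using kle K0 by (simp add: mult_right_mono)
    also have "\<dots> = real n * (\<eta> * K * p / real n)" using np by (simp add: field_simps)
    also have "\<dots> \<le> real n * (\<epsilon> / 2)" using kb np unfolding p_def by (intro mult_left_mono) simp_all
    finally have a: "real k * K \<le> real n * (\<epsilon> / 2)" .
    have "S3 / K^2 = real n * (emp_mean Hs n (\<lambda>C. real (cdeg C) ^ 3) / K^2)" unfolding S3E by simp
    also have "\<dots> \<le> real n * (\<epsilon> / 2)" using E3 np by (intro mult_left_mono) simp_all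
    finally have b: "S3 / K^2 \<le> real n * (\<epsilon> / 2)" .
    show ?thesis unfolding R_def using a b by linarith
  qed
  have LR: "L - R > real n * (\<nu> - 2 * \<epsilon>)"
  proof -
    have "L > real n * (\<nu> - \<epsilon>)" unfolding LE using Db np by simp
    thus ?thesis using Rb by (simp add: algebra_simps)
  qed
  have nu2: "\<nu> - 2 * \<epsilon> > 0" using epsnu by simp
  have LRpos: "L - R > 0" using LR nu2 np by (smt (verit) mult_pos_pos)
  have RL: "R < real (card (hcm_hedges Hs n))" using LRpos unfolding L_def by simp
  have evA: "even (card (hcm_hedges Hs n))" using ev by (simp add: card_hcm_hedges)
  have PB: "measure_pmf.prob (hcm_exploration Hs n) {disc. real (first_sizes_sum Hs k disc) > \<delta> * p}
     \<le> qq \<theta> R Hs n ^ k * exp (- \<theta> * (\<delta> * p))"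
    by (rule prob_bound[OF th0 Rc RL evA])
  define B where "B = (\<Sum>h\<in>hcm_hedges Hs n. exp (\<theta> * real (csize (Hs (fst h)))) - 1)"
  have qdef: "qq \<theta> R Hs n = 1 + B / (L - R)" by (simp add: qq_def B_def L_def)
  have B_eq: "B = (\<Sum>i<n. d i * (exp (\<theta> * s i) - 1))"
    unfolding B_def d_def s_def by (rule sum_hedges)
  have Bb: "B \<le> 2 * \<theta> * DS"
  proof -
    have "B \<le> (\<Sum>i<n. d i * (2 * (\<theta> * s i)))"
      unfolding B_eq
    proof (rule sum_mono)
      fix i assume i: "i \<in> {..<n}"
      have "\<theta> * s i \<le> 1" using ssm[of i] i sm1 unfolding \<theta>_def by (simp add: field_simps)
      moreover have "\<theta> * s i \<ge> 0" using th0 s0 by simp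
      ultimately have "exp (\<theta> * s i) - 1 \<le> 2 * (\<theta> * s i)" by (intro exp_le2)
      thus "d i * (exp (\<theta> * s i) - 1) \<le> d i * (2 * (\<theta> * s i))" using d0 by (intro mult_left_mono)
    qed
    also have "\<dots> = 2 * \<theta> * DS" unfolding DS_def by (simp add: sum_distrib_left mult_ac)
    finally show ?thesis .
  qed
  have B0: "B \<ge> 0" unfolding B_def by (rule sum_nonneg) (use th0 in simp)
  have qexp: "qq \<theta> R Hs n \<le> exp (B / (L - R))"
    unfolding qdef by (rule exp_ge_add_one_self)
  have q0: "qq \<theta> R Hs n \<ge> 0" using qdef B0 LRpos by simp
  have "qq \<theta> R Hs n ^ k \<le> exp (B / (L - R)) ^ k" by (rule power_mono[OF qexp q0])
  also have "\<dots> = exp (real k * (B / (L - R)))" by (rule exp_of_nat_mult[symmetric])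
  finally have qk: "qq \<theta> R Hs n ^ k \<le> exp (real k * (B / (L - R)))" .
  have key: "real k * (B / (L - R)) \<le> \<theta> * p * D'"
  proof -
    have mu: "\<mu> + \<epsilon> \<ge> 0"
    proof -
      have "emp_mean Hs n (\<lambda>C. real (cdeg C) * real (csize C)) \<ge> 0"
        unfolding emp_mean_def by (intro divide_nonneg_nonneg sum_nonneg) auto
      thus ?thesis using DSb by simp
    qed
    have "B / (L - R) \<le> 2 * \<theta> * DS / (L - R)" using Bb LRpos by (simp add: divide_right_mono)
    also have "\<dots> \<le> 2 * \<theta> * (real n * (\<mu> + \<epsilon>)) / (real n * (\<nu> - 2 * \<epsilon>))"
    proof (rule frac_le)
      show "0 \<le> 2 * \<theta> * (real n * (\<mu> + \<epsilon>))" using th0 mu np by simp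
      show "2 * \<theta> * DS \<le> 2 * \<theta> * (real n * (\<mu> + \<epsilon>))"
        unfolding DSE using DSb th0 np by (intro mult_left_mono) simp_all
      show "0 < real n * (\<nu> - 2 * \<epsilon>)" using np nu2 by simp
      show "real n * (\<nu> - 2 * \<epsilon>) \<le> L - R" using LR by simp
    qed
    also have "\<dots> = (real n * (2 * \<theta> * (\<mu> + \<epsilon>))) / (real n * (\<nu> - 2 * \<epsilon>))" by (simp add: mult_ac)
    also have "\<dots> = 2 * \<theta> * (\<mu> + \<epsilon>) / (\<nu> - 2 * \<epsilon>)"
      by (rule mult_divide_mult_cancel_left) (use np in simp)
    also have "\<dots> = \<theta> * (2 * (\<mu> + \<epsilon>) / (\<nu> - 2 * \<epsilon>))" by simp
    finally have 1: "B / (L - R) \<le> \<theta> * (2 * (\<mu> + \<epsilon>) / (\<nu> - 2 * \<epsilon>))" .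
    have BLR0: "B / (L - R) \<ge> 0" using B0 LRpos by simp
    have "real k * (B / (L - R)) \<le> \<eta> * p * (B / (L - R))" by (rule mult_right_mono[OF kle BLR0])
    also have "\<dots> \<le> \<eta> * p * (\<theta> * (2 * (\<mu> + \<epsilon>) / (\<nu> - 2 * \<epsilon>)))"
      using 1 eta pp by (intro mult_left_mono) simp_all
    also have "\<dots> = \<theta> * p * (2 * \<eta> * (\<mu> + \<epsilon>) / (\<nu> - 2 * \<epsilon>))" by (simp add: field_simps)
    also have "\<dots> \<le> \<theta> * p * D'" using gD th0 pp by (intro mult_left_mono) simp_all
    finally show ?thesis .
  qed
  have "qq \<theta> R Hs n ^ k * exp (- \<theta> * (\<delta> * p)) \<le> exp (real k * (B / (L - R))) * exp (- \<theta> * (\<delta> * p))"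
    using qk by (simp add: mult_right_mono)
  also have "\<dots> = exp (real k * (B / (L - R)) - \<theta> * (\<delta> * p))" by (simp add: exp_diff exp_minus field_simps)
  also have "\<dots> \<le> exp (\<theta> * p * D' - \<theta> * (\<delta> * p))" using key by simp
  also have "\<theta> * p * D' - \<theta> * (\<delta> * p) = - \<zeta> * p / sm"
  proof -
    have "\<theta> * p * D' - \<theta> * (\<delta> * p) = (- \<zeta> * p) * \<theta>" unfolding zeta by (simp add: algebra_simps)
    also have "\<dots> = - \<zeta> * p / sm" unfolding \<theta>_def by simp
    finally show ?thesis .
  qed
  finally show ?thesis using PB unfolding p_def k_def sm_def by simp
qed



theorem lemma2p3:
  fixes H :: "nat \<Rightarrow> nat \<Rightarrow> community" and P :: "community pmf" and \<eta> \<delta> :: real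
  assumes comm: "\<forall>n. \<forall>i<n. is_community (H n i)"
    and even_tot: "\<forall>n. even (\<Sum>i<n. cdeg (H n i))"
    \<comment> \<open>community regularity condition\<close>
    and reg_i: "\<forall>C. (\<lambda>n. real (card {i. i < n \<and> H n i = C}) / real n) \<longlonglongrightarrow> pmf P C"
    and reg_ii_int: "integrable (measure_pmf P) (\<lambda>C. real (csize C))"
    and reg_ii: "(\<lambda>n. emp_mean (H n) n (\<lambda>C. real (csize C)))
                   \<longlonglongrightarrow> measure_pmf.expectation P (\<lambda>C. real (csize C))"
    and reg_iii_int: "integrable (measure_pmf P) (\<lambda>C. real (cdeg C) * real (csize C))"
    and reg_iii: "(\<lambda>n. emp_mean (H n) n (\<lambda>C. real (cdeg C) * real (csize C)))
                   \<longlonglongrightarrow> measure_pmf.expectation P (\<lambda>C. real (cdeg C) * real (csize C))"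
    and reg_iv: "(\<lambda>n. real (hcm_smax (H n) n) * ln (real n) / real n powr (2/3)) \<longlonglongrightarrow> 0"
    \<comment> \<open>inter-community connectivity condition\<close>
    and con_i_int: "integrable (measure_pmf P) (\<lambda>C. real (cdeg C) ^ 3)"
    and con_i: "(\<lambda>n. emp_mean (H n) n (\<lambda>C. real (cdeg C) ^ 3))
                   \<longlonglongrightarrow> measure_pmf.expectation P (\<lambda>C. real (cdeg C) ^ 3)"
    and con_ii0: "measure_pmf.prob P {C. cdeg C = 0} < 1"
    and con_ii1: "0 < measure_pmf.prob P {C. cdeg C = 1}" "measure_pmf.prob P {C. cdeg C = 1} < 1"
    and con_iii: "\<exists>lam::real. (\<lambda>n. (emp_mean (H n) n (\<lambda>C. real (cdeg C) * (real (cdeg C) - 1))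
                                   / emp_mean (H n) n (\<lambda>C. real (cdeg C))
                                 - 1 - lam * real n powr (-1/3)) * real n powr (1/3)) \<longlonglongrightarrow> 0"
    \<comment> \<open>parameters\<close>
    and eta: "\<eta> > 0" and delta: "\<delta> > 0"
    and delta_eta: "\<delta> > 2 * \<eta> * measure_pmf.expectation P (\<lambda>C. real (cdeg C) * real (csize C))
                              / measure_pmf.expectation P (\<lambda>C. real (cdeg C))"
  shows "\<exists>\<zeta>>0. \<forall>\<^sub>F n in sequentially.
           measure_pmf.prob (hcm_exploration (H n) n)
             {disc. real (first_sizes_sum (H n) (nat \<lfloor>\<eta> * real n powr (2/3)\<rfloor>) disc) > \<delta> * real n powr (2/3)}
           \<le> exp (- \<zeta> * real n powr (2/3) / real (hcm_smax (H n) n))"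
proof -
  define \<nu> where "\<nu> = measure_pmf.expectation P (\<lambda>C. real (cdeg C))"
  define \<mu> where "\<mu> = measure_pmf.expectation P (\<lambda>C. real (cdeg C) * real (csize C))"
  define M3 where "M3 = measure_pmf.expectation P (\<lambda>C. real (cdeg C) ^ 3)"
  have intD: "integrable (measure_pmf P) (\<lambda>C. real (cdeg C))"
  proof (rule Bochner_Integration.integrable_bound[OF con_i_int])
    show "(\<lambda>C. real (cdeg C)) \<in> borel_measurable (measure_pmf P)" by simp
    show "AE x in measure_pmf P. norm (real (cdeg x)) \<le> norm (real (cdeg x) ^ 3)"
    proof (rule AE_I2)
      fix x
      have "cdeg x \<le> cdeg x ^ 3"
        by (cases "cdeg x") (simp_all add: power3_eq_cube)
      hence "real (cdeg x) \<le> real (cdeg x) ^ 3" by (metis of_nat_le_iff of_nat_power)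
      thus "norm (real (cdeg x)) \<le> norm (real (cdeg x) ^ 3)" by simp
    qed
  qed
  have nu_pos: "\<nu> > 0"
  proof -
    have "measure_pmf.prob P {C. cdeg C \<noteq> 0} = 1 - measure_pmf.prob P {C. cdeg C = 0}"
    proof -
      have "{C. cdeg C \<noteq> 0} = space (measure_pmf P) - {C. cdeg C = 0}" by auto
      thus ?thesis using measure_pmf.prob_compl[of "{C. cdeg C = 0}" P] by simp
    qed
    hence pos: "measure_pmf.prob P {C. cdeg C \<noteq> 0} > 0" using con_ii0 by simp
    have "measure_pmf.prob P {C. cdeg C \<noteq> 0} = measure_pmf.expectation P (indicator {C. cdeg C \<noteq> 0})"
      by simp
    also have "\<dots> \<le> \<nu>" unfolding \<nu>_def
      by (rule integral_mono[OF _ intD]) (auto simp: indicator_def measure_pmf.emeasure_eq_measure intro!: integrable_real_indicator)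
    finally show ?thesis using pos by simp
  qed
  have mu0: "\<mu> \<ge> 0" unfolding \<mu>_def by (rule integral_nonneg_AE) simp
  have M30: "M3 \<ge> 0" unfolding M3_def by (rule integral_nonneg_AE) simp
  have de: "\<delta> > 2 * \<eta> * \<mu> / \<nu>" using delta_eta unfolding \<mu>_def \<nu>_def .
  define D' where "D' = (\<delta> + 2 * \<eta> * \<mu> / \<nu>) / 2"
  define \<zeta> where "\<zeta> = \<delta> - D'"
  have zpos: "\<zeta> > 0" unfolding \<zeta>_def D'_def using de by simp
  have gD: "2 * \<eta> * \<mu> / \<nu> < D'" unfolding D'_def using de by simp
  have glim: "((\<lambda>e. 2 * \<eta> * (\<mu> + e) / (\<nu> - 2 * e)) \<longlongrightarrow> 2 * \<eta> * (\<mu> + 0) / (\<nu> - 2 * 0)) (at_right 0)"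
    by (intro tendsto_intros) (use nu_pos in auto)
  hence "eventually (\<lambda>e. 2 * \<eta> * (\<mu> + e) / (\<nu> - 2 * e) < D') (at_right (0::real))"
    using gD by (intro order_tendstoD(2)) simp_all
  then obtain b where b: "b > 0" "\<And>e. e > 0 \<Longrightarrow> e < b \<Longrightarrow> 2 * \<eta> * (\<mu> + e) / (\<nu> - 2 * e) < D'"
    unfolding eventually_at_right_field by blast
  define \<epsilon> where "\<epsilon> = min (b / 2) (\<nu> / 4)"
  have eps: "\<epsilon> > 0" unfolding \<epsilon>_def using b nu_pos by simp
  have epsnu: "2 * \<epsilon> < \<nu>" unfolding \<epsilon>_def using nu_pos by linarith
  have epsb: "\<epsilon> < b" unfolding \<epsilon>_def using b by linarith
  have gDe: "2 * \<eta> * (\<mu> + \<epsilon>) / (\<nu> - 2 * \<epsilon>) \<le> D'" using b(2)[OF eps epsb] by simp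
  define K where "K = max 1 (2 * (M3 + 1) / \<epsilon>)"
  have K1: "K \<ge> 1" unfolding K_def by simp
  have KM: "(M3 + 1) / K^2 \<le> \<epsilon> / 2"
  proof -
    have "K \<le> K^2" using K1 by (simp add: power2_eq_square)
    hence "(M3 + 1) / K^2 \<le> (M3 + 1) / K" using K1 M30 by (intro divide_left_mono) simp_all
    also have "\<dots> \<le> \<epsilon> / 2"
    proof -
      have "2 * (M3 + 1) / \<epsilon> \<le> K" unfolding K_def by simp
      hence "2 * (M3 + 1) \<le> K * \<epsilon>" using eps by (simp add: divide_le_eq)
      thus ?thesis using K1 by (simp add: divide_le_eq field_simps)
    qed
    finally show ?thesis .
  qed
  have ev1: "\<forall>\<^sub>F n in sequentially. n > 0" by (rule eventually_gt_at_top)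
  have ev2: "\<forall>\<^sub>F n in sequentially. emp_mean (H n) n (\<lambda>C. real (cdeg C) * real (csize C)) < \<mu> + \<epsilon>"
    using order_tendstoD(2)[OF reg_iii] eps unfolding \<mu>_def by simp
  have ev3: "\<forall>\<^sub>F n in sequentially. emp_mean (H n) n (\<lambda>C. real (cdeg C)) > \<nu> - \<epsilon>"
    unfolding \<nu>_def by (rule emp_liminf[OF reg_i intD _ eps]) simp
  have ev4: "\<forall>\<^sub>F n in sequentially. emp_mean (H n) n (\<lambda>C. real (cdeg C) ^ 3) < M3 + 1"
    using order_tendstoD(2)[OF con_i] unfolding M3_def by simp
  have ev5: "\<forall>\<^sub>F n in sequentially. \<eta> * K * real n powr (2/3) / real n < \<epsilon> / 2"
  proof -
    have "(\<lambda>n. real n powr (-1/3)) \<longlonglongrightarrow> 0"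
      by (rule tendsto_neg_powr) (simp_all add: filterlim_real_sequentially)
    hence lim0: "(\<lambda>n. \<eta> * K * real n powr (-1/3)) \<longlonglongrightarrow> 0"
      using tendsto_mult_left[of _ 0 sequentially "\<eta> * K"] by simp
    have e2: "(0::real) < \<epsilon> / 2" using eps by simp
    have "\<forall>\<^sub>F n in sequentially. \<eta> * K * real n powr (-1/3) < \<epsilon> / 2"
      by (rule order_tendstoD(2)[OF lim0 e2])
    with ev1 show ?thesis
    proof (rule eventually_elim2)
      fix n :: nat assume n: "n > 0" and a: "\<eta> * K * real n powr (-1/3) < \<epsilon> / 2"
      have "real n powr (2/3) / real n = real n powr (2/3) / real n powr 1" using n by simp
      also have "\<dots> = real n powr (2/3 - 1)" by (rule powr_diff[symmetric])
      also have "\<dots> = real n powr (-1/3)" by simp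
      finally have "\<eta> * K * real n powr (2/3) / real n = \<eta> * K * real n powr (-1/3)"
        by (metis times_divide_eq_right)
      thus "\<eta> * K * real n powr (2/3) / real n < \<epsilon> / 2" using a by simp
    qed
  qed
  have "\<forall>\<^sub>F n in sequentially.
           measure_pmf.prob (hcm_exploration (H n) n)
             {disc. real (first_sizes_sum (H n) (nat \<lfloor>\<eta> * real n powr (2/3)\<rfloor>) disc) > \<delta> * real n powr (2/3)}
           \<le> exp (- \<zeta> * real n powr (2/3) / real (hcm_smax (H n) n))"
    using ev1 ev2 ev3 ev4 ev5
  proof (eventually_elim)
    case (elim n)
    have E3: "emp_mean (H n) n (\<lambda>C. real (cdeg C) ^ 3) / K^2 \<le> \<epsilon> / 2"
    proof -
      have "emp_mean (H n) n (\<lambda>C. real (cdeg C) ^ 3) / K^2 \<le> (M3 + 1) / K^2"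
        using elim(4) K1 by (intro divide_right_mono) simp_all
      thus ?thesis using KM by linarith
    qed
    show ?case
      by (rule bound_n[OF elim(1) _ _ eta eps epsnu K1 E3 _ elim(3) _ gDe \<zeta>_def])
         (use comm even_tot elim(2) elim(5) in auto)
  qed
  thus ?thesis using zpos by blast
qed


end
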